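(* Let $(G_n)_{n\in\mathbb N}$ and $(H_n)_{n\in\mathbb N}$ be sequences of groups and let $(P_n)_{n\in\mathbb N}$ be a partition of $\mathbb N$ into finite sets. If for every $n$ there is an injective homomorphism $\varphi_n:G_n\to *_{i\in P_n}H_i$, then $\mathcal A(G_n)$ embeds in $\mathcal A(H_n)$.
   Context: For a sequence of groups $(G_n)_{n\in\mathbb N}$, an infinite word is a map $w:L\to\bigsqcup_n (G_n\setminus\{1\})$ from a countable linearly ordered set $L$ such that $w^{-1}(G_n)$ is finite for every $n$. Two infinite words are equivalent if for every $m$ their restrictions to the letters from $G_1,\dots,G_m$ represent the same element of $G_1*\cdots*G_m$. The topologist's product $\circledast_n G_n$ is the group of equivalence classes, with multiplication induced by concatenation and inversion by reversing the order and inverting each letter. The free product $*_n G_n$ is the subgroup of classes of finite words. The archipelago group is $\mathcal A(G_n):=\circledast_n G_n/\langle\langle *_n G_n\rangle\rangle$ (quotient by normal closure). *)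

theory Defs
  imports "HOL-Algebra.Algebra"
begin

definition fp_words :: "(nat \<Rightarrow> ('a, 'c) monoid_scheme) \<Rightarrow> nat set \<Rightarrow> (nat \<times> 'a) list set" where
  "fp_words G I = {ws. \<forall>(i, g) \<in> set ws. i \<in> I \<and> g \<in> carrier (G i)}"

inductive fp_step :: "(nat \<Rightarrow> ('a, 'c) monoid_scheme) \<Rightarrow> (nat \<times> 'a) list \<Rightarrow> (nat \<times> 'a) list \<Rightarrow> bool"
  for G where
  merge: "fp_step G (xs @ [(n, g), (n, h)] @ ys) (xs @ [(n, g \<otimes>\<^bsub>G n\<^esub> h)] @ ys)"
| delete: "fp_step G (xs @ [(n, \<one>\<^bsub>G n\<^esub>)] @ ys) (xs @ ys)"

definition fp_rel :: "(nat \<Rightarrow> ('a, 'c) monoid_scheme) \<Rightarrow> nat set \<Rightarrow> (nat \<times> 'a) list \<Rightarrow> (nat \<times> 'a) list \<Rightarrow> bool" where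
  "fp_rel G I xs ys \<longleftrightarrow> fp_step G xs ys \<and> xs \<in> fp_words G I \<and> ys \<in> fp_words G I"

definition fp_eq :: "(nat \<Rightarrow> ('a, 'c) monoid_scheme) \<Rightarrow> nat set \<Rightarrow> (nat \<times> 'a) list \<Rightarrow> (nat \<times> 'a) list \<Rightarrow> bool" where
  "fp_eq G I = equivclp (fp_rel G I)"

definition fp_class :: "(nat \<Rightarrow> ('a, 'c) monoid_scheme) \<Rightarrow> nat set \<Rightarrow> (nat \<times> 'a) list \<Rightarrow> (nat \<times> 'a) list set" where
  "fp_class G I xs = {ys \<in> fp_words G I. fp_eq G I xs ys}"

definition free_product :: "(nat \<Rightarrow> ('a, 'c) monoid_scheme) \<Rightarrow> nat set \<Rightarrow> ((nat \<times> 'a) list set) monoid" where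
  "free_product G I =
    \<lparr> carrier = fp_class G I ` fp_words G I,
      monoid.mult = (\<lambda>A B. {zs \<in> fp_words G I. \<exists>xs\<in>A. \<exists>ys\<in>B. fp_eq G I (xs @ ys) zs}),
      one = fp_class G I [] \<rparr>"

text \<open>An infinite word is a pair (L, w) where the countable linear order L is realised as a
  subset of the rationals (every countable linear order embeds in Q) and w x = (n, g)
  means that the letter at position x is g, taken from G n.\<close>

type_synonym 'a iword = "rat set \<times> (rat \<Rightarrow> nat \<times> 'a)"

definition is_iword :: "(nat \<Rightarrow> ('a, 'c) monoid_scheme) \<Rightarrow> 'a iword \<Rightarrow> bool" where
  "is_iword G W \<longleftrightarrow>
     (\<forall>x \<in> fst W. snd (snd W x) \<in> carrier (G (fst (snd W x)))
                \<and> snd (snd W x) \<noteq> \<one>\<^bsub>G (fst (snd W x))\<^esub>)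
   \<and> (\<forall>n. finite {x \<in> fst W. fst (snd W x) = n})"

definition iword_restr :: "nat \<Rightarrow> 'a iword \<Rightarrow> (nat \<times> 'a) list" where
  "iword_restr m W = map (snd W) (sorted_list_of_set {x \<in> fst W. fst (snd W x) < m})"

definition iword_eq :: "(nat \<Rightarrow> ('a, 'c) monoid_scheme) \<Rightarrow> 'a iword \<Rightarrow> 'a iword \<Rightarrow> bool" where
  "iword_eq G W V \<longleftrightarrow> (\<forall>m. fp_eq G {..<m} (iword_restr m W) (iword_restr m V))"

text \<open>Order isomorphisms Q -> Q_{<0} and Q -> Q_{>0}, used to concatenate.\<close>
definition neg_emb :: "rat \<Rightarrow> rat" where
  "neg_emb q = (if q \<le> 0 then q - 1 else - 1 / (q + 1))"
definition neg_emb_inv :: "rat \<Rightarrow> rat" where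
  "neg_emb_inv x = (if x \<le> -1 then x + 1 else - 1 / x - 1)"
definition pos_emb :: "rat \<Rightarrow> rat" where
  "pos_emb q = - neg_emb (- q)"
definition pos_emb_inv :: "rat \<Rightarrow> rat" where
  "pos_emb_inv x = - neg_emb_inv (- x)"

definition iword_concat :: "'a iword \<Rightarrow> 'a iword \<Rightarrow> 'a iword" where
  "iword_concat W V =
     (neg_emb ` fst W \<union> pos_emb ` fst V,
      \<lambda>x. if x < 0 then snd W (neg_emb_inv x) else snd V (pos_emb_inv x))"

definition iword_class :: "(nat \<Rightarrow> ('a, 'c) monoid_scheme) \<Rightarrow> 'a iword \<Rightarrow> 'a iword set" where
  "iword_class G W = {V. is_iword G V \<and> iword_eq G W V}"

definition topologists_product :: "(nat \<Rightarrow> ('a, 'c) monoid_scheme) \<Rightarrow> ('a iword set) monoid" where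
  "topologists_product G =
    \<lparr> carrier = iword_class G ` {W. is_iword G W},
      monoid.mult = (\<lambda>A B. {U. is_iword G U \<and> (\<exists>W\<in>A. \<exists>V\<in>B. iword_eq G (iword_concat W V) U)}),
      one = iword_class G ({}, \<lambda>_. undefined) \<rparr>"

text \<open>The free product as the subgroup of classes of finite words.\<close>
definition free_part :: "(nat \<Rightarrow> ('a, 'c) monoid_scheme) \<Rightarrow> 'a iword set set" where
  "free_part G = {A \<in> carrier (topologists_product G). \<exists>W\<in>A. finite (fst W)}"

definition normal_closure :: "('a, 'c) monoid_scheme \<Rightarrow> 'a set \<Rightarrow> 'a set" where
  "normal_closure K S = generate K {g \<otimes>\<^bsub>K\<^esub> s \<otimes>\<^bsub>K\<^esub> inv\<^bsub>K\<^esub> g | g s. g \<in> carrier K \<and> s \<in> S}"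

definition archipelago :: "(nat \<Rightarrow> ('a, 'c) monoid_scheme) \<Rightarrow> ('a iword set set) monoid" where
  "archipelago G = topologists_product G Mod normal_closure (topologists_product G) (free_part G)"

definition embeds :: "('a, 'c) monoid_scheme \<Rightarrow> ('b, 'd) monoid_scheme \<Rightarrow> bool" where
  "embeds K M \<longleftrightarrow> (\<exists>f. f \<in> hom K M \<and> inj_on f (carrier K))"

definition finite_partition :: "(nat \<Rightarrow> nat set) \<Rightarrow> bool" where
  "finite_partition P \<longleftrightarrow> (\<forall>n. finite (P n) \<and> P n \<noteq> {})
     \<and> (\<forall>m n. m \<noteq> n \<longrightarrow> P m \<inter> P n = {}) \<and> (\<Union>n. P n) = UNIV"

end

theory Submission
  imports Defs "HOL-Library.Countable"
begin


definition wd :: "(nat \<Rightarrow> ('a,'c) monoid_scheme) \<Rightarrow> (nat \<times> 'a) list \<Rightarrow> bool" where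
  "wd G xs \<longleftrightarrow> (\<forall>x\<in>set xs. snd x \<in> carrier (G (fst x)))"

fun reduced :: "(nat \<Rightarrow> ('a,'c) monoid_scheme) \<Rightarrow> (nat \<times> 'a) list \<Rightarrow> bool" where
  "reduced G [] = True"
| "reduced G (x # xs) = (snd x \<in> carrier (G (fst x)) \<and> snd x \<noteq> \<one>\<^bsub>G (fst x)\<^esub> \<and> reduced G xs \<and> (xs = [] \<or> fst (hd xs) \<noteq> fst x))"

definition ins :: "(nat \<Rightarrow> ('a,'c) monoid_scheme) \<Rightarrow> nat \<times> 'a \<Rightarrow> (nat \<times> 'a) list \<Rightarrow> (nat \<times> 'a) list" where
  "ins G x r = (if snd x = \<one>\<^bsub>G (fst x)\<^esub> then r else
     (case r of [] \<Rightarrow> [x]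
      | y # r' \<Rightarrow> if fst y = fst x then
           (if snd x \<otimes>\<^bsub>G (fst x)\<^esub> snd y = \<one>\<^bsub>G (fst x)\<^esub> then r' else (fst x, snd x \<otimes>\<^bsub>G (fst x)\<^esub> snd y) # r')
         else x # r))"

definition act :: "(nat \<Rightarrow> ('a,'c) monoid_scheme) \<Rightarrow> (nat \<times> 'a) list \<Rightarrow> (nat \<times> 'a) list \<Rightarrow> (nat \<times> 'a) list" where
  "act G xs r = foldr (ins G) xs r"

definition red :: "(nat \<Rightarrow> ('a,'c) monoid_scheme) \<Rightarrow> (nat \<times> 'a) list \<Rightarrow> (nat \<times> 'a) list" where
  "red G xs = act G xs []"

lemma wd_simps[simp]: "wd G [] = True" "wd G (x # xs) = (snd x \<in> carrier (G (fst x)) \<and> wd G xs)"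
  "wd G (xs @ ys) = (wd G xs \<and> wd G ys)"
  by (auto simp: wd_def)

lemma act_simps[simp]: "act G [] r = r" "act G (x # xs) r = ins G x (act G xs r)"
  "act G (xs @ ys) r = act G xs (act G ys r)"
  by (auto simp: act_def)

lemma reduced_wd: "reduced G r \<Longrightarrow> wd G r"
  by (induction r) auto

lemma ins_one[simp]: "ins G (n, \<one>\<^bsub>G n\<^esub>) r = r"
  by (simp add: ins_def)

lemma reduced_ins:
  assumes grp: "\<And>n. group (G n)" and r: "reduced G r" and x: "snd x \<in> carrier (G (fst x))"
  shows "reduced G (ins G x r)"
proof (cases r)
  case Nil then show ?thesis using x by (auto simp: ins_def)
next
  case (Cons y r')
  then show ?thesis using r x
    by (cases r') (auto simp: ins_def group.is_monoid[OF grp] monoid.m_closed)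
qed

lemma reduced_act:
  assumes grp: "\<And>n. group (G n)" and "reduced G r" "wd G xs"
  shows "reduced G (act G xs r)"
  using assms(3) by (induction xs) (auto intro: reduced_ins[OF grp] assms(2))

lemma reduced_red:
  assumes grp: "\<And>n. group (G n)" and "wd G xs"
  shows "reduced G (red G xs)"
  using reduced_act[OF grp _ assms(2)] by (simp add: red_def)

lemma wd_ins:
  assumes grp: "\<And>n. group (G n)" and "wd G r" "snd x \<in> carrier (G (fst x))"
  shows "wd G (ins G x r)"
  using assms(2,3) by (cases r) (auto simp: ins_def group.is_monoid[OF grp] monoid.m_closed)

lemma ins_ins:
  assumes grp: "\<And>n. group (G n)" and r: "reduced G r"
    and g: "g \<in> carrier (G n)" and h: "h \<in> carrier (G n)"
  shows "ins G (n, g) (ins G (n, h) r) = ins G (n, g \<otimes>\<^bsub>G n\<^esub> h) r"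
proof -
  interpret grp: group "G n" by (rule grp)
  show ?thesis
  proof (cases "h = \<one>\<^bsub>G n\<^esub>")
    case True then show ?thesis using g by simp
  next
    case hn: False
    show ?thesis
    proof (cases "g = \<one>\<^bsub>G n\<^esub>")
      case True then show ?thesis using h by simp
    next
      case gn: False
      show ?thesis
      proof (cases r)
        case Nil then show ?thesis using g h gn hn by (auto simp: ins_def)
      next
        case (Cons y r')
        obtain m k where y: "y = (m, k)" by (cases y)
        show ?thesis
        proof (cases "m = n")
          case False then show ?thesis using g h gn hn Cons y by (auto simp: ins_def)
        next
          case True
          have k: "k \<in> carrier (G n)" using r Cons y True by auto
          have r': "r' = [] \<or> fst (hd r') \<noteq> n" using r Cons y True by auto
          show ?thesis
          proof (cases "h \<otimes>\<^bsub>G n\<^esub> k = \<one>\<^bsub>G n\<^esub>")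
            case hk: True
            have gk: "g \<otimes>\<^bsub>G n\<^esub> h \<otimes>\<^bsub>G n\<^esub> k = g" using hk g h k by (simp add: grp.m_assoc)
            have "ins G (n, g) r' = (n, g) # r'"
              using r' gn by (cases r') (auto simp: ins_def)
            moreover have "g \<otimes>\<^bsub>G n\<^esub> h = \<one>\<^bsub>G n\<^esub> \<Longrightarrow> k = g"
              using hk g h k by (metis grp.inv_equality grp.l_inv_ex grp.r_inv_ex grp.m_assoc grp.r_one grp.l_one)
            ultimately show ?thesis using hk gk g h k gn hn Cons y True by (auto simp: ins_def)
          next
            case hk: False
            have "g \<otimes>\<^bsub>G n\<^esub> h = \<one>\<^bsub>G n\<^esub> \<Longrightarrow> g \<otimes>\<^bsub>G n\<^esub> (h \<otimes>\<^bsub>G n\<^esub> k) = k"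
              using g h k by (simp add: grp.m_assoc[symmetric])
            moreover have "g \<otimes>\<^bsub>G n\<^esub> (h \<otimes>\<^bsub>G n\<^esub> k) = g \<otimes>\<^bsub>G n\<^esub> h \<otimes>\<^bsub>G n\<^esub> k"
              using g h k by (simp add: grp.m_assoc)
            moreover have "k \<noteq> \<one>\<^bsub>G n\<^esub>" using r Cons y True by auto
            ultimately show ?thesis using hk g h k gn hn Cons y True by (auto simp: ins_def)
          qed
        qed
      qed
    qed
  qed
qed

lemma act_ins_commute:
  assumes grp: "\<And>n. group (G n)" and s: "reduced G s" and r: "reduced G r"
    and x: "snd x \<in> carrier (G (fst x))"
  shows "act G (ins G x s) r = ins G x (act G s r)"
proof -
  obtain n g where xe: "x = (n, g)" by (cases x)
  have g: "g \<in> carrier (G n)" using x xe by simp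
  interpret grp: group "G n" by (rule grp)
  show ?thesis
  proof (cases "g = \<one>\<^bsub>G n\<^esub>")
    case True then show ?thesis using xe by simp
  next
    case gn: False
    show ?thesis
    proof (cases s)
      case Nil then show ?thesis using xe gn by (simp add: ins_def)
    next
      case (Cons y s')
      obtain m h where y: "y = (m, h)" by (cases y)
      have h: "h \<in> carrier (G m)" and s': "reduced G s'" using s Cons y by auto
      have ars: "reduced G (act G s' r)" using reduced_act[OF grp r reduced_wd[OF s']] .
      show ?thesis
      proof (cases "m = n")
        case False then show ?thesis using xe gn Cons y by (simp add: ins_def)
      next
        case True
        have eq: "ins G (n, g) (act G s r) = ins G (n, g \<otimes>\<^bsub>G n\<^esub> h) (act G s' r)"
          using Cons y True ins_ins[OF grp ars g, of h] h by simp
        show ?thesis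
        proof (cases "g \<otimes>\<^bsub>G n\<^esub> h = \<one>\<^bsub>G n\<^esub>")
          case True
          then show ?thesis using eq xe gn Cons y \<open>m = n\<close> by (simp add: ins_def)
        next
          case False
          then show ?thesis using eq xe gn Cons y \<open>m = n\<close> by (simp add: ins_def)
        qed
      qed
    qed
  qed
qed

lemma act_red:
  assumes grp: "\<And>n. group (G n)" and "wd G xs" "reduced G r"
  shows "act G (red G xs) r = act G xs r"
  using assms(2)
proof (induction xs)
  case Nil then show ?case by (simp add: red_def)
next
  case (Cons x xs)
  have "act G (red G (x # xs)) r = act G (ins G x (red G xs)) r" by (simp add: red_def)
  also have "\<dots> = ins G x (act G (red G xs) r)"
    using act_ins_commute[OF grp reduced_red[OF grp] assms(3)] Cons.prems by simp
  also have "\<dots> = act G (x # xs) r" using Cons by simp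
  finally show ?case .
qed

lemma red_append: "red G (xs @ ys) = act G xs (red G ys)"
  by (simp add: red_def)

lemma act_reduced_app:
  "reduced G (s @ t) \<Longrightarrow> act G s t = s @ t"
proof (induction s)
  case Nil then show ?case by simp
next
  case (Cons x s)
  have "reduced G (s @ t)" using Cons.prems by simp
  then have IH: "act G s t = s @ t" by (rule Cons.IH)
  show ?case using Cons.prems IH
    by (cases "s @ t") (auto simp: ins_def)
qed

lemma red_reduced: "reduced G r \<Longrightarrow> red G r = r"
  using act_reduced_app[of G r "[]"] by (simp add: red_def)

lemma red_red:
  assumes grp: "\<And>n. group (G n)" and "wd G xs"
  shows "red G (red G xs) = red G xs"
  by (rule red_reduced[OF reduced_red[OF grp assms(2)]])

lemma red_append2:
  assumes grp: "\<And>n. group (G n)" and "wd G xs" "wd G ys"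
  shows "red G (xs @ ys) = red G (red G xs @ red G ys)"
proof -
  have "red G (red G xs @ red G ys) = act G (red G xs) (red G (red G ys))" by (rule red_append)
  also have "\<dots> = act G (red G xs) (red G ys)" using red_red[OF grp assms(3)] by simp
  also have "\<dots> = act G xs (red G ys)" by (rule act_red[OF grp assms(2) reduced_red[OF grp assms(3)]])
  finally show ?thesis by (simp add: red_append)
qed

definition invw :: "(nat \<Rightarrow> ('a,'c) monoid_scheme) \<Rightarrow> (nat \<times> 'a) list \<Rightarrow> (nat \<times> 'a) list" where
  "invw G xs = rev (map (\<lambda>x. (fst x, inv\<^bsub>G (fst x)\<^esub> snd x)) xs)"

lemma invw_simps[simp]: "invw G [] = []" "invw G (x # xs) = invw G xs @ [(fst x, inv\<^bsub>G (fst x)\<^esub> snd x)]"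
  "invw G (xs @ ys) = invw G ys @ invw G xs"
  by (auto simp: invw_def)

lemma wd_invw:
  assumes grp: "\<And>n. group (G n)" shows "wd G xs \<Longrightarrow> wd G (invw G xs)"
  by (induction xs) (auto simp: group.inv_closed[OF grp])

lemma invw_invw:
  assumes grp: "\<And>n. group (G n)" shows "wd G xs \<Longrightarrow> invw G (invw G xs) = xs"
  by (induction xs) (auto simp: group.inv_inv[OF grp])

lemma act_invw1:
  assumes grp: "\<And>n. group (G n)" and "wd G xs" "reduced G r"
  shows "act G (invw G xs) (act G xs r) = r"
  using assms(2,3)
proof (induction xs arbitrary: r)
  case Nil
  show ?case by simp
next
  case (Cons x xs)
  obtain n g where xe: "x = (n, g)" by (cases x)
  have g: "g \<in> carrier (G n)" and xs: "wd G xs" using Cons.prems xe by auto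
  interpret grp: group "G n" by (rule grp)
  have "act G (invw G (x # xs)) (act G (x # xs) r)
      = act G (invw G xs) (ins G (n, inv\<^bsub>G n\<^esub> g) (ins G (n, g) (act G xs r)))"
    using xe by simp
  also have "ins G (n, inv\<^bsub>G n\<^esub> g) (ins G (n, g) (act G xs r)) = act G xs r"
    using ins_ins[OF grp reduced_act[OF grp Cons.prems(2) xs] grp.inv_closed[OF g] g] g by simp
  finally show ?case using Cons.IH[OF xs Cons.prems(2)] by simp
qed

lemma act_invw2:
  assumes grp: "\<And>n. group (G n)" and "wd G xs" "reduced G r"
  shows "act G xs (act G (invw G xs) r) = r"
  using act_invw1[OF grp wd_invw[OF grp assms(2)] assms(3)] invw_invw[OF grp assms(2)] by simp


lemma fp_words_iff: "xs \<in> fp_words G I \<longleftrightarrow> wd G xs \<and> (\<forall>x\<in>set xs. fst x \<in> I)"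
  by (auto simp: fp_words_def wd_def)

lemma red_cons[simp]: "red G (x # xs) = ins G x (red G xs)"
  by (simp add: red_def)

lemma red_step:
  assumes grp: "\<And>n. group (G n)" and st: "fp_step G xs ys" and w: "wd G xs"
  shows "red G xs = red G ys \<and> wd G ys"
  using st w
proof cases
  case (merge as n g h bs)
  then have g: "g \<in> carrier (G n)" and h: "h \<in> carrier (G n)" and bs: "wd G bs" using w by auto
  have "ins G (n, g) (ins G (n, h) (red G bs)) = ins G (n, g \<otimes>\<^bsub>G n\<^esub> h) (red G bs)"
    by (rule ins_ins[OF grp reduced_red[OF grp bs] g h])
  then show ?thesis using merge w g h by (simp add: red_append group.is_monoid[OF grp] monoid.m_closed)
next
  case (delete as n bs)
  then show ?thesis using w by (simp add: red_append)
qed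

lemma fp_eq_imp:
  assumes grp: "\<And>n. group (G n)" and "fp_eq G I xs ys"
  shows "xs = ys \<or> (xs \<in> fp_words G I \<and> ys \<in> fp_words G I \<and> red G xs = red G ys)"
  using assms(2) unfolding fp_eq_def
proof (induction rule: equivclp_induct)
  case base then show ?case by simp
next
  case (step y z)
  from step.hyps(2) have yz: "y \<in> fp_words G I" "z \<in> fp_words G I"
    "fp_step G y z \<or> fp_step G z y" by (auto simp: fp_rel_def)
  have "red G y = red G z"
    using yz red_step[of G y z, OF grp] red_step[of G z y, OF grp] by (auto simp: fp_words_iff)
  then show ?case using step.IH yz by auto
qed

lemma fp_eq_cons:
  assumes "fp_eq G I xs ys" "[x] \<in> fp_words G I"
  shows "fp_eq G I (x # xs) (x # ys)"
  using assms(1) unfolding fp_eq_def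
proof (induction rule: equivclp_induct)
  case base then show ?case by simp
next
  case (step y z)
  have st: "\<And>a b. fp_step G a b \<Longrightarrow> fp_step G (x # a) (x # b)"
  proof -
    fix a b assume "fp_step G a b"
    then show "fp_step G (x # a) (x # b)"
    proof cases
      case (merge as n g h bs)
      then show ?thesis using fp_step.merge[of G "x # as" n g h bs] by simp
    next
      case (delete as n bs)
      then show ?thesis using fp_step.delete[of G "x # as" n bs] by simp
    qed
  qed
  have "fp_rel G I (x # y) (x # z) \<or> fp_rel G I (x # z) (x # y)"
    using step.hyps(2) assms(2) st by (auto simp: fp_rel_def fp_words_def)
  then show ?case using step.IH equivclp_into_equivclp by metis
qed

lemma set_ins: "fst ` set (ins G x r) \<subseteq> insert (fst x) (fst ` set r)"
  by (cases r) (auto simp: ins_def split: if_splits)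

lemma set_act: "fst ` set (act G xs r) \<subseteq> fst ` set xs \<union> fst ` set r"
proof (induction xs)
  case (Cons x xs)
  have "fst ` set (act G (x # xs) r) \<subseteq> insert (fst x) (fst ` set (act G xs r))"
    using set_ins[of G x "act G xs r"] by simp
  also have "\<dots> \<subseteq> fst ` set (x # xs) \<union> fst ` set r" using Cons.IH by auto
  finally show ?case .
qed simp

lemma red_words:
  assumes grp: "\<And>n. group (G n)" and "xs \<in> fp_words G I"
  shows "red G xs \<in> fp_words G I"
proof -
  have "wd G (red G xs)" using assms(2) reduced_wd[OF reduced_red[OF grp]] by (auto simp: fp_words_iff)
  moreover have "fst ` set (red G xs) \<subseteq> I"
  proof -
    have "fst ` set (red G xs) \<subseteq> fst ` set xs" using set_act[of G xs "[]"] by (simp add: red_def)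
    moreover have "fst ` set xs \<subseteq> I" using assms(2) unfolding fp_words_iff by blast
    ultimately show ?thesis by blast
  qed
  ultimately show ?thesis by (auto simp: fp_words_iff)
qed

lemma fp_eq_ins:
  assumes grp: "\<And>n. group (G n)" and r: "reduced G r" "r \<in> fp_words G I" and x: "[x] \<in> fp_words G I"
  shows "fp_eq G I (x # r) (ins G x r)"
proof -
  obtain n g where xe: "x = (n, g)" by (cases x)
  have g: "g \<in> carrier (G n)" and n: "n \<in> I" using x xe by (auto simp: fp_words_iff)
  interpret grp: group "G n" by (rule grp)
  have xr: "x # r \<in> fp_words G I" using x r by (auto simp: fp_words_iff)
  show ?thesis
  proof (cases "g = \<one>\<^bsub>G n\<^esub>")
    case True
    have "fp_rel G I (x # r) r"
      using fp_step.delete[of G "[]" n r] True xe xr r by (simp add: fp_rel_def)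
    then show ?thesis using True xe by (auto simp: fp_eq_def)
  next
    case gn: False
    show ?thesis
    proof (cases r)
      case Nil then show ?thesis using xe gn by (simp add: ins_def fp_eq_def)
    next
      case (Cons y r')
      obtain m h where y: "y = (m, h)" by (cases y)
      show ?thesis
      proof (cases "m = n")
        case False then show ?thesis using xe gn Cons y by (simp add: ins_def fp_eq_def)
      next
        case True
        have h: "h \<in> carrier (G n)" using r Cons y True by auto
        have w1: "(n, g \<otimes>\<^bsub>G n\<^esub> h) # r' \<in> fp_words G I"
          using xr Cons y True g h by (auto simp: fp_words_iff)
        have s1: "fp_rel G I (x # r) ((n, g \<otimes>\<^bsub>G n\<^esub> h) # r')"
          using fp_step.merge[of G "[]" n g h r'] xr w1 xe Cons y True by (simp add: fp_rel_def)
        show ?thesis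
        proof (cases "g \<otimes>\<^bsub>G n\<^esub> h = \<one>\<^bsub>G n\<^esub>")
          case True
          have s2: "fp_rel G I ((n, g \<otimes>\<^bsub>G n\<^esub> h) # r') r'"
            using fp_step.delete[of G "[]" n r'] True w1 r Cons by (simp add: fp_rel_def fp_words_iff)
          have "fp_eq G I (x # r) r'" using s1 s2 unfolding fp_eq_def
            by (meson equivclp_trans r_into_equivclp)
          then show ?thesis using True xe gn Cons y \<open>m = n\<close> by (simp add: ins_def)
        next
          case False
          then show ?thesis using s1 xe gn Cons y \<open>m = n\<close> by (auto simp: ins_def fp_eq_def)
        qed
      qed
    qed
  qed
qed

lemma fp_eq_red:
  assumes grp: "\<And>n. group (G n)" and "xs \<in> fp_words G I"
  shows "fp_eq G I xs (red G xs)"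
  using assms(2)
proof (induction xs)
  case Nil then show ?case by (simp add: red_def fp_eq_def)
next
  case (Cons x xs)
  have xs: "xs \<in> fp_words G I" and x: "[x] \<in> fp_words G I" using Cons.prems by (auto simp: fp_words_iff)
  have "fp_eq G I (x # xs) (x # red G xs)" by (rule fp_eq_cons[OF Cons.IH[OF xs] x])
  moreover have "fp_eq G I (x # red G xs) (ins G x (red G xs))"
  proof (rule fp_eq_ins[of G])
    show "reduced G (red G xs)" using reduced_red[of G xs] grp xs by (simp add: fp_words_iff)
    show "red G xs \<in> fp_words G I" using red_words[of G xs I] grp xs by simp
  qed (use grp x in auto)
  ultimately have "fp_eq G I (x # xs) (ins G x (red G xs))"
    unfolding fp_eq_def by (rule equivclp_trans)
  then show ?case by simp
qed

lemma fp_eq_iff: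
  assumes grp: "\<And>n. group (G n)"
  shows "fp_eq G I xs ys \<longleftrightarrow> xs = ys \<or> (xs \<in> fp_words G I \<and> ys \<in> fp_words G I \<and> red G xs = red G ys)"
proof
  assume "fp_eq G I xs ys" then show "xs = ys \<or> (xs \<in> fp_words G I \<and> ys \<in> fp_words G I \<and> red G xs = red G ys)"
    using fp_eq_imp[of G I xs ys] grp by blast
next
  assume h: "xs = ys \<or> (xs \<in> fp_words G I \<and> ys \<in> fp_words G I \<and> red G xs = red G ys)"
  show "fp_eq G I xs ys"
  proof (cases "xs = ys")
    case True then show ?thesis by (simp add: fp_eq_def)
  next
    case False
    then have w: "xs \<in> fp_words G I" "ys \<in> fp_words G I" and e: "red G xs = red G ys" using h by auto
    have 1: "fp_eq G I xs (red G xs)" using fp_eq_red[of G xs I] grp w by blast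
    have 2: "fp_eq G I ys (red G ys)" using fp_eq_red[of G ys I] grp w by blast
    show ?thesis using 1 2 e unfolding fp_eq_def
      using equivclp_sym equivclp_trans by metis
  qed
qed


lemma red_filter_ins:
  assumes grp: "\<And>n. group (G n)" and r: "reduced G r" and x: "snd x \<in> carrier (G (fst x))"
  shows "red G (filter (\<lambda>l. Q (fst l)) (ins G x r)) =
     (if Q (fst x) then ins G x (red G (filter (\<lambda>l. Q (fst l)) r)) else red G (filter (\<lambda>l. Q (fst l)) r))"
proof -
  obtain n g where xe: "x = (n, g)" by (cases x)
  have g: "g \<in> carrier (G n)" using x xe by simp
  interpret grp: group "G n" by (rule grp)
  show ?thesis
  proof (cases "g = \<one>\<^bsub>G n\<^esub>")
    case True then show ?thesis using xe by simp
  next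
    case gn: False
    show ?thesis
    proof (cases r)
      case Nil then show ?thesis using xe gn by (simp add: ins_def)
    next
      case (Cons y r')
      obtain m h where y: "y = (m, h)" by (cases y)
      have h: "h \<in> carrier (G m)" and r': "reduced G r'" using r Cons y by auto
      have rr: "reduced G (red G (filter (\<lambda>l. Q (fst l)) r'))"
        using reduced_red[of G "filter (\<lambda>l. Q (fst l)) r'"] grp reduced_wd[OF r'] unfolding wd_def by simp
      show ?thesis
      proof (cases "m = n")
        case False then show ?thesis using xe gn Cons y by (simp add: ins_def)
      next
        case True
        show ?thesis
        proof (cases "Q n")
          case False then show ?thesis using xe gn Cons y True by (simp add: ins_def)
        next
          case qn: True
          have e: "ins G (n, g) (ins G (n, h) (red G (filter (\<lambda>l. Q (fst l)) r')))
              = ins G (n, g \<otimes>\<^bsub>G n\<^esub> h) (red G (filter (\<lambda>l. Q (fst l)) r'))"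
            using ins_ins[of G, OF grp rr g] h True by simp
          show ?thesis
          proof (cases "g \<otimes>\<^bsub>G n\<^esub> h = \<one>\<^bsub>G n\<^esub>")
            case True
            then show ?thesis using e xe gn Cons y \<open>m = n\<close> qn by (simp add: ins_def)
          next
            case False
            then show ?thesis using e xe gn Cons y \<open>m = n\<close> qn by (simp add: ins_def)
          qed
        qed
      qed
    qed
  qed
qed

lemma red_filter:
  assumes grp: "\<And>n. group (G n)" and "wd G xs"
  shows "red G (filter (\<lambda>l. Q (fst l)) xs) = red G (filter (\<lambda>l. Q (fst l)) (red G xs))"
  using assms(2)
proof (induction xs)
  case Nil then show ?case by (simp add: red_def)
next
  case (Cons x xs)
  have xs: "wd G xs" and x: "snd x \<in> carrier (G (fst x))" using Cons.prems by auto
  have "red G (filter (\<lambda>l. Q (fst l)) (red G (x # xs))) = red G (filter (\<lambda>l. Q (fst l)) (ins G x (red G xs)))"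
    by simp
  also have "\<dots> = (if Q (fst x) then ins G x (red G (filter (\<lambda>l. Q (fst l)) (red G xs))) else red G (filter (\<lambda>l. Q (fst l)) (red G xs)))"
    using red_filter_ins[of G "red G xs" x Q] grp reduced_red[of G xs] xs x by simp
  also have "\<dots> = red G (filter (\<lambda>l. Q (fst l)) (x # xs))" using Cons.IH[OF xs] by simp
  finally show ?case by simp
qed

lemma reduced_append:
  assumes "reduced G s" "reduced G t" "s = [] \<or> t = [] \<or> fst (last s) \<noteq> fst (hd t)"
  shows "reduced G (s @ t)"
  using assms
proof (induction s)
  case Nil then show ?case by simp
next
  case (Cons x s)
  then show ?case by (cases s) auto
qed

locale prop19 =
  fixes G :: "nat \<Rightarrow> 'a monoid" and H :: "nat \<Rightarrow> 'b monoid"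
    and P :: "nat \<Rightarrow> nat set" and \<phi> :: "nat \<Rightarrow> 'a \<Rightarrow> (nat \<times> 'b) list set"
  assumes grpG: "\<And>n. group (G n)" and grpH: "\<And>n. group (H n)"
    and part: "finite_partition P"
    and hom: "\<And>n. \<phi> n \<in> hom (G n) (free_product H (P n))"
    and inj: "\<And>n. inj_on (\<phi> n) (carrier (G n))"
begin

definition cw :: "nat \<times> 'a \<Rightarrow> (nat \<times> 'b) list" where
  "cw x = red H (SOME ws. ws \<in> \<phi> (fst x) (snd x))"

lemma P_disj: "m \<noteq> n \<Longrightarrow> P m \<inter> P n = {}"
  using part by (auto simp: finite_partition_def)

lemma P_fin: "finite (P n)"
  using part by (auto simp: finite_partition_def)

lemma P_cover: "\<exists>n. i \<in> P n"
  using part by (auto simp: finite_partition_def)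

lemma P_unique: "i \<in> P m \<Longrightarrow> i \<in> P n \<Longrightarrow> m = n"
  using P_disj by blast

lemma phi_mem:
  assumes g: "g \<in> carrier (G n)"
  shows "\<exists>ws \<in> fp_words H (P n). \<phi> n g = fp_class H (P n) ws"
proof -
  have "\<phi> n g \<in> carrier (free_product H (P n))" using hom[of n] g by (auto simp: hom_def)
  then show ?thesis by (auto simp: free_product_def)
qed

lemma mem_phi:
  assumes g: "g \<in> carrier (G n)" and ws: "ws \<in> \<phi> n g"
  shows "ws \<in> fp_words H (P n) \<and> red H ws = cw (n, g)"
proof -
  obtain vs where vs: "vs \<in> fp_words H (P n)" "\<phi> n g = fp_class H (P n) vs" using phi_mem[OF g] by blast
  have ex: "\<exists>ws. ws \<in> \<phi> n g" using ws by blast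
  define ws' where "ws' = (SOME ws. ws \<in> \<phi> n g)"
  have ws': "ws' \<in> \<phi> n g" unfolding ws'_def by (rule someI_ex[OF ex])
  have 1: "ws \<in> fp_words H (P n)" "fp_eq H (P n) vs ws" using ws vs by (auto simp: fp_class_def)
  have 2: "ws' \<in> fp_words H (P n)" "fp_eq H (P n) vs ws'" using ws' vs by (auto simp: fp_class_def)
  have "red H vs = red H ws" using 1 vs(1) fp_eq_iff[of H "P n" vs ws] grpH by auto
  moreover have "red H vs = red H ws'" using 2 vs(1) fp_eq_iff[of H "P n" vs ws'] grpH by auto
  ultimately show ?thesis using 1 by (simp add: cw_def ws'_def)
qed

lemma cw_props:
  assumes g: "g \<in> carrier (G n)"
  shows "cw (n, g) \<in> fp_words H (P n)" "reduced H (cw (n, g))" "fp_class H (P n) (cw (n, g)) = \<phi> n g"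
proof -
  obtain vs where vs: "vs \<in> fp_words H (P n)" "\<phi> n g = fp_class H (P n) vs" using phi_mem[OF g] by blast
  have "vs \<in> \<phi> n g" using vs by (simp add: fp_class_def fp_eq_def)
  then have m: "red H vs = cw (n, g)" using mem_phi[OF g] by blast
  show "cw (n, g) \<in> fp_words H (P n)" using red_words[of H vs "P n"] grpH vs m by simp
  show "reduced H (cw (n, g))" using reduced_red[of H vs] grpH vs m by (simp add: fp_words_iff)
  have "fp_eq H (P n) vs (cw (n, g))" using fp_eq_red[of H vs "P n"] grpH vs m by simp
  then have "\<And>zs. fp_eq H (P n) (cw (n, g)) zs \<longleftrightarrow> fp_eq H (P n) vs zs"
    unfolding fp_eq_def by (meson equivclp_sym equivclp_trans)
  then show "fp_class H (P n) (cw (n, g)) = \<phi> n g" using vs by (simp add: fp_class_def)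
qed

lemma cw_wd: "g \<in> carrier (G n) \<Longrightarrow> wd H (cw (n, g))"
  using cw_props(1) by (simp add: fp_words_iff)

lemma cw_mult:
  assumes g: "g \<in> carrier (G n)" and h: "h \<in> carrier (G n)"
  shows "cw (n, g \<otimes>\<^bsub>G n\<^esub> h) = red H (cw (n, g) @ cw (n, h))"
proof -
  have gh: "g \<otimes>\<^bsub>G n\<^esub> h \<in> carrier (G n)" by (rule monoid.m_closed[OF group.is_monoid[OF grpG] g h])
  have e: "\<phi> n (g \<otimes>\<^bsub>G n\<^esub> h) = \<phi> n g \<otimes>\<^bsub>free_product H (P n)\<^esub> \<phi> n h"
    using hom[of n] g h unfolding hom_def by blast
  have "cw (n, g \<otimes>\<^bsub>G n\<^esub> h) \<in> fp_class H (P n) (cw (n, g \<otimes>\<^bsub>G n\<^esub> h))"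
    unfolding fp_class_def using cw_props(1)[OF gh] by (simp add: fp_eq_def)
  then have "cw (n, g \<otimes>\<^bsub>G n\<^esub> h) \<in> \<phi> n g \<otimes>\<^bsub>free_product H (P n)\<^esub> \<phi> n h"
    using cw_props(3)[OF gh] e by simp
  then obtain xs ys where xs: "xs \<in> \<phi> n g" and ys: "ys \<in> \<phi> n h"
    and eq: "fp_eq H (P n) (xs @ ys) (cw (n, g \<otimes>\<^bsub>G n\<^esub> h))"
    unfolding free_product_def by auto
  have xs': "xs \<in> fp_words H (P n)" "red H xs = cw (n, g)" using mem_phi[OF g xs] by auto
  have ys': "ys \<in> fp_words H (P n)" "red H ys = cw (n, h)" using mem_phi[OF h ys] by auto
  have "xs @ ys = cw (n, g \<otimes>\<^bsub>G n\<^esub> h) \<or> red H (xs @ ys) = red H (cw (n, g \<otimes>\<^bsub>G n\<^esub> h))"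
    using eq fp_eq_iff[of H "P n" "xs @ ys" "cw (n, g \<otimes>\<^bsub>G n\<^esub> h)"] grpH by blast
  then have "red H (xs @ ys) = red H (cw (n, g \<otimes>\<^bsub>G n\<^esub> h))" by metis
  also have "\<dots> = cw (n, g \<otimes>\<^bsub>G n\<^esub> h)" using red_reduced cw_props(2)[OF gh] by blast
  finally have "cw (n, g \<otimes>\<^bsub>G n\<^esub> h) = red H (xs @ ys)" by simp
  also have "\<dots> = red H (red H xs @ red H ys)"
    using red_append2[of H xs ys] grpH xs'(1) ys'(1) unfolding fp_words_iff by blast
  finally show ?thesis using xs' ys' by simp
qed

lemma cw_one: "cw (n, \<one>\<^bsub>G n\<^esub>) = []"
proof -
  define c where "c = cw (n, \<one>\<^bsub>G n\<^esub>)"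
  have one: "\<one>\<^bsub>G n\<^esub> \<in> carrier (G n)" using group.is_monoid[OF grpG] monoid.one_closed by blast
  have r: "reduced H c" using cw_props(2)[OF one] c_def by simp
  have wc: "wd H c" by (rule reduced_wd[OF r])
  have "c = red H (c @ c)" using cw_mult[OF one one] c_def
    by (simp add: group.is_monoid[OF grpG] monoid.l_one[OF _ one])
  also have "\<dots> = act H c c" using red_reduced[OF r] by (simp add: red_append)
  finally have 1: "act H c c = c" by simp
  have "act H (invw H c) (act H c c) = c" using act_invw1[of H c c] grpH wc r by simp
  moreover have "act H (invw H c) c = []"
    using act_invw1[of H c "[]"] grpH wc red_reduced[OF r] by (simp add: red_def)
  ultimately show ?thesis using 1 c_def by simp
qed

lemma cw_nonempty:
  assumes g: "g \<in> carrier (G n)" and gn: "g \<noteq> \<one>\<^bsub>G n\<^esub>"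
  shows "cw (n, g) \<noteq> []"
proof
  assume c: "cw (n, g) = []"
  have one: "\<one>\<^bsub>G n\<^esub> \<in> carrier (G n)" using group.is_monoid[OF grpG] monoid.one_closed by blast
  have "\<phi> n g = \<phi> n \<one>\<^bsub>G n\<^esub>" using cw_props(3)[OF g] cw_props(3)[OF one] c cw_one by simp
  then show False using inj[of n] g one gn by (auto simp: inj_on_def)
qed

definition Psi :: "(nat \<times> 'a) list \<Rightarrow> (nat \<times> 'b) list" where
  "Psi xs = concat (map cw xs)"

lemma Psi_simps[simp]: "Psi [] = []" "Psi (x # xs) = cw x @ Psi xs" "Psi (xs @ ys) = Psi xs @ Psi ys"
  by (auto simp: Psi_def)

lemma Psi_wd: "wd G xs \<Longrightarrow> wd H (Psi xs)"
  by (induction xs) (auto simp: cw_wd)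

lemma Psi_idx: "wd G xs \<Longrightarrow> y \<in> set (Psi xs) \<Longrightarrow> \<exists>x\<in>set xs. fst y \<in> P (fst x)"
proof (induction xs)
  case (Cons x xs)
  show ?case
  proof (cases "y \<in> set (cw x)")
    case True
    have "cw (fst x, snd x) \<in> fp_words H (P (fst x))" using cw_props(1)[of "snd x" "fst x"] Cons.prems by simp
    then show ?thesis using True by (auto simp: fp_words_iff)
  next
    case False then show ?thesis using Cons by auto
  qed
qed simp

lemma Psi_ins:
  assumes r: "reduced G r" and x: "snd x \<in> carrier (G (fst x))"
  shows "red H (Psi (ins G x r)) = act H (cw x) (red H (Psi r))"
proof -
  obtain n g where xe: "x = (n, g)" by (cases x)
  have g: "g \<in> carrier (G n)" using x xe by simp
  interpret grp: group "G n" by (rule grpG)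
  have wr: "wd H (Psi r)" using Psi_wd[OF reduced_wd[OF r]] .
  show ?thesis
  proof (cases "g = \<one>\<^bsub>G n\<^esub>")
    case True then show ?thesis using xe cw_one by simp
  next
    case gn: False
    show ?thesis
    proof (cases r)
      case Nil then show ?thesis using xe gn by (simp add: ins_def red_def)
    next
      case (Cons y r')
      obtain m h where y: "y = (m, h)" by (cases y)
      have h: "h \<in> carrier (G m)" and r': "reduced G r'" using r Cons y by auto
      have wr': "wd H (Psi r')" using Psi_wd[OF reduced_wd[OF r']] .
      show ?thesis
      proof (cases "m = n")
        case False then show ?thesis using xe gn Cons y by (simp add: ins_def red_append)
      next
        case True
        have rr: "reduced H (red H (Psi r'))" using reduced_red[of H "Psi r'"] grpH wr' by simp
        have "act H (cw x) (red H (Psi r)) = act H (cw (n, g) @ cw (n, h)) (red H (Psi r'))"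
          using xe Cons y True by (simp add: red_append)
        also have "\<dots> = act H (red H (cw (n, g) @ cw (n, h))) (red H (Psi r'))"
          using act_red[of H "cw (n, g) @ cw (n, h)" "red H (Psi r')"] grpH rr cw_wd[OF g] cw_wd h True by simp
        also have "\<dots> = act H (cw (n, g \<otimes>\<^bsub>G n\<^esub> h)) (red H (Psi r'))"
          using cw_mult[OF g] h True by simp
        finally have e: "act H (cw x) (red H (Psi r)) = act H (cw (n, g \<otimes>\<^bsub>G n\<^esub> h)) (red H (Psi r'))" .
        show ?thesis
        proof (cases "g \<otimes>\<^bsub>G n\<^esub> h = \<one>\<^bsub>G n\<^esub>")
          case True
          then show ?thesis using e xe gn Cons y \<open>m = n\<close> cw_one by (simp add: ins_def red_def)
        next
          case False
          then show ?thesis using e xe gn Cons y \<open>m = n\<close> by (simp add: ins_def red_append)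
        qed
      qed
    qed
  qed
qed

lemma Psi_red:
  assumes "wd G xs"
  shows "red H (Psi xs) = red H (Psi (red G xs))"
  using assms
proof (induction xs)
  case Nil then show ?case by (simp add: red_def)
next
  case (Cons x xs)
  have xs: "wd G xs" and x: "snd x \<in> carrier (G (fst x))" using Cons.prems by auto
  have "red H (Psi (red G (x # xs))) = red H (Psi (ins G x (red G xs)))" by simp
  also have "\<dots> = act H (cw x) (red H (Psi (red G xs)))"
    using Psi_ins[OF reduced_red[of G xs, OF grpG xs] x] .
  also have "\<dots> = red H (Psi (x # xs))" using Cons.IH[OF xs] by (simp add: red_append)
  finally show ?case by simp
qed

lemma Psi_reduced:
  assumes "reduced G r"
  shows "reduced H (Psi r) \<and> (r \<noteq> [] \<longrightarrow> Psi r \<noteq> [] \<and> fst (hd (Psi r)) \<in> P (fst (hd r)))"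
  using assms
proof (induction r)
  case Nil then show ?case by simp
next
  case (Cons x r)
  obtain n g where xe: "x = (n, g)" by (cases x)
  have g: "g \<in> carrier (G n)" and gn: "g \<noteq> \<one>\<^bsub>G n\<^esub>" and r: "reduced G r"
    and d: "r = [] \<or> fst (hd r) \<noteq> n" using Cons.prems xe by auto
  have ne: "cw (n, g) \<noteq> []" by (rule cw_nonempty[OF g gn])
  have cwP: "set (cw (n, g)) \<subseteq> {y. fst y \<in> P n}" using cw_props(1)[OF g] by (auto simp: fp_words_iff)
  have IH: "reduced H (Psi r)" "r \<noteq> [] \<longrightarrow> Psi r \<noteq> [] \<and> fst (hd (Psi r)) \<in> P (fst (hd r))"
    using Cons.IH[OF r] by auto
  have lst: "fst (last (cw (n, g))) \<in> P n" using last_in_set[OF ne] cwP by auto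
  have "Psi r = [] \<or> fst (last (cw (n, g))) \<noteq> fst (hd (Psi r))"
  proof (cases "r = []")
    case False
    then have "fst (hd (Psi r)) \<in> P (fst (hd r))" "fst (hd r) \<noteq> n" using IH(2) d by auto
    then show ?thesis using lst P_unique by metis
  qed simp
  then have "reduced H (cw (n, g) @ Psi r)"
    using reduced_append[OF cw_props(2)[OF g] IH(1)] by blast
  moreover have "fst (hd (cw (n, g))) \<in> P n" using hd_in_set[OF ne] cwP by auto
  ultimately show ?case using xe ne by simp
qed

lemma Psi_inj:
  assumes "wd G xs" "red H (Psi xs) = []"
  shows "red G xs = []"
proof -
  have r: "reduced G (red G xs)" using reduced_red[of G xs] grpG assms(1) by simp
  have "red H (Psi (red G xs)) = Psi (red G xs)"
    using Psi_reduced[OF r] red_reduced by blast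
  then have "red H (Psi xs) = Psi (red G xs)"
    using Psi_red[OF assms(1)] by simp
  then show ?thesis using assms(2) Psi_reduced[OF r] by auto
qed

end


lemma sorted_eqI:
  assumes "finite A" "sorted_wrt (<) l" "set l = A"
  shows "sorted_list_of_set A = l"
  using assms strict_sorted_equal[of l "sorted_list_of_set A"]
  by (simp add: sorted_list_of_set.strict_sorted_key_list_of_set)

lemma sorted_filter:
  assumes "finite A"
  shows "sorted_list_of_set {x\<in>A. Q x} = filter Q (sorted_list_of_set A)"
  by (rule sorted_eqI) (use assms in \<open>auto intro: sorted_wrt_filter\<close>)

lemma sorted_image_mono:
  assumes "finite A" "strict_mono_on A f"
  shows "sorted_list_of_set (f ` A) = map f (sorted_list_of_set A)"
proof (rule sorted_eqI)
  show "sorted_wrt (<) (map f (sorted_list_of_set A))"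
    unfolding sorted_wrt_map
    using sorted_wrt_mono_rel[OF _ strict_sorted_list_of_set[of A]]
      assms by (auto simp: strict_mono_on_def)
qed (use assms in auto)

lemma sorted_union:
  assumes "finite A" "finite B" "\<forall>a\<in>A. \<forall>b\<in>B. a < b"
  shows "sorted_list_of_set (A \<union> B) = sorted_list_of_set A @ sorted_list_of_set B"
  by (rule sorted_eqI) (use assms in \<open>auto simp: sorted_wrt_append\<close>)

lemma sorted_neg:
  fixes A :: "rat set"
  assumes "finite A"
  shows "sorted_list_of_set (uminus ` A) = rev (map uminus (sorted_list_of_set A))"
proof (rule sorted_eqI)
  show "sorted_wrt (<) (rev (map uminus (sorted_list_of_set A)))"
    unfolding sorted_wrt_rev sorted_wrt_map
    using strict_sorted_list_of_set[of A]
    by (simp add: sorted_wrt_mono_rel)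
qed (use assms in auto)

definition pos :: "nat set \<Rightarrow> 'a iword \<Rightarrow> rat set" where
  "pos S W = {x \<in> fst W. fst (snd W x) \<in> S}"

definition rs :: "nat set \<Rightarrow> 'a iword \<Rightarrow> (nat \<times> 'a) list" where
  "rs S W = map (snd W) (sorted_list_of_set (pos S W))"

lemma iword_restr_rs: "iword_restr m W = rs {..<m} W"
  by (simp add: iword_restr_def rs_def pos_def)

lemma finite_pos:
  assumes "is_iword G W" "finite S"
  shows "finite (pos S W)"
proof -
  have "pos S W = (\<Union>n\<in>S. {x \<in> fst W. fst (snd W x) = n})" by (auto simp: pos_def)
  then show ?thesis using assms by (auto simp: is_iword_def)
qed

lemma rs_wd:
  assumes "is_iword G W" "finite S"
  shows "rs S W \<in> fp_words G S"
  using assms finite_pos[OF assms] unfolding rs_def fp_words_iff is_iword_def wd_def pos_def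
  by auto

lemma neg_emb_lt: "neg_emb q < 0"
  by (auto simp: neg_emb_def)

lemma pos_emb_gt: "pos_emb q > 0"
  using neg_emb_lt[of "-q"] by (simp add: pos_emb_def)

lemma neg_emb_mono: "strict_mono neg_emb"
proof (rule strict_monoI)
  fix x y :: rat assume "x < y"
  moreover have "x \<le> 0 \<Longrightarrow> 0 < y \<Longrightarrow> x * y \<le> 0" by (simp add: mult_nonpos_nonneg)
  ultimately show "neg_emb x < neg_emb y"
    by (auto simp: neg_emb_def field_simps)
qed

lemma pos_emb_mono: "strict_mono pos_emb"
  using neg_emb_mono by (auto simp: strict_mono_def pos_emb_def)

lemma neg_emb_inv[simp]: "neg_emb_inv (neg_emb q) = q"
  by (auto simp: neg_emb_def neg_emb_inv_def field_simps)

lemma pos_emb_inv[simp]: "pos_emb_inv (pos_emb q) = q"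
  by (simp add: pos_emb_def pos_emb_inv_def)

lemma pos_emb_not_neg[simp]: "\<not> pos_emb q < 0"
  using pos_emb_gt[of q] by simp

declare neg_emb_lt[simp]

lemma snd_concat_neg[simp]: "snd (iword_concat W V) (neg_emb q) = snd W q"
  by (simp add: iword_concat_def)

lemma snd_concat_pos[simp]: "snd (iword_concat W V) (pos_emb q) = snd V q"
  by (simp add: iword_concat_def)

lemma pos_concat:
  "pos S (iword_concat W V) = neg_emb ` pos S W \<union> pos_emb ` pos S V"
proof -
  have "pos S (iword_concat W V) = {x \<in> neg_emb ` fst W \<union> pos_emb ` fst V. fst (snd (iword_concat W V) x) \<in> S}"
    by (simp add: pos_def iword_concat_def)
  also have "\<dots> = neg_emb ` pos S W \<union> pos_emb ` pos S V"
    unfolding pos_def by auto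
  finally show ?thesis .
qed

lemma rs_concat:
  assumes "is_iword G W" "is_iword G V" "finite S"
  shows "rs S (iword_concat W V) = rs S W @ rs S V"
proof -
  have fW: "finite (pos S W)" and fV: "finite (pos S V)" using finite_pos assms by blast+
  have "\<forall>a\<in>neg_emb ` pos S W. \<forall>b\<in>pos_emb ` pos S V. a < b"
    using neg_emb_lt pos_emb_gt less_trans by blast
  then have "sorted_list_of_set (pos S (iword_concat W V)) =
     sorted_list_of_set (neg_emb ` pos S W) @ sorted_list_of_set (pos_emb ` pos S V)"
    unfolding pos_concat using fW fV by (intro sorted_union) auto
  also have "\<dots> = map neg_emb (sorted_list_of_set (pos S W)) @ map pos_emb (sorted_list_of_set (pos S V))"
    using fW fV neg_emb_mono pos_emb_mono
    by (simp add: sorted_image_mono strict_mono_on_def strict_mono_def)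
  finally show ?thesis unfolding rs_def by (simp add: comp_def)
qed

lemma finite_pos_iff_iword:
  "is_iword G W \<longleftrightarrow> (\<forall>x \<in> fst W. snd (snd W x) \<in> carrier (G (fst (snd W x)))
                \<and> snd (snd W x) \<noteq> \<one>\<^bsub>G (fst (snd W x))\<^esub>) \<and> (\<forall>n. finite (pos {n} W))"
  by (simp add: is_iword_def pos_def)

lemma is_iword_concat:
  assumes "is_iword G W" "is_iword G V"
  shows "is_iword G (iword_concat W V)"
proof -
  have "\<forall>n. finite (pos {n} (iword_concat W V))"
    unfolding pos_concat using finite_pos[OF assms(1)] finite_pos[OF assms(2)] by simp
  moreover have "\<forall>x \<in> fst (iword_concat W V). snd (snd (iword_concat W V) x) \<in> carrier (G (fst (snd (iword_concat W V) x)))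
     \<and> snd (snd (iword_concat W V) x) \<noteq> \<one>\<^bsub>G (fst (snd (iword_concat W V) x))\<^esub>"
  proof
    fix x assume "x \<in> fst (iword_concat W V)"
    then consider q where "q \<in> fst W" "x = neg_emb q" | q where "q \<in> fst V" "x = pos_emb q"
      by (auto simp: iword_concat_def)
    then show "snd (snd (iword_concat W V) x) \<in> carrier (G (fst (snd (iword_concat W V) x)))
       \<and> snd (snd (iword_concat W V) x) \<noteq> \<one>\<^bsub>G (fst (snd (iword_concat W V) x))\<^esub>"
      by cases (use assms in \<open>auto simp: is_iword_def\<close>)
  qed
  ultimately show ?thesis unfolding finite_pos_iff_iword by blast
qed

definition invi :: "(nat \<Rightarrow> ('a, 'c) monoid_scheme) \<Rightarrow> 'a iword \<Rightarrow> 'a iword" where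
  "invi G W = (uminus ` fst W, \<lambda>x. (fst (snd W (-x)), inv\<^bsub>G (fst (snd W (-x)))\<^esub> snd (snd W (-x))))"

lemma pos_invi: "pos S (invi G W) = uminus ` pos S W"
  by (force simp: pos_def invi_def)

lemma rs_invi:
  assumes "is_iword G W" "finite S"
  shows "rs S (invi G W) = invw G (rs S W)"
proof -
  have f: "finite (pos S W)" by (rule finite_pos[OF assms])
  show ?thesis unfolding rs_def pos_invi sorted_neg[OF f] invw_def
    by (simp add: rev_map comp_def invi_def)
qed

lemma is_iword_invi:
  assumes grp: "\<And>n. group (G n)" and W: "is_iword G W"
  shows "is_iword G (invi G W)"
proof -
  have "\<forall>n. finite (pos {n} (invi G W))"
    unfolding pos_invi using finite_pos[OF W] by simp
  moreover have "\<forall>x \<in> fst (invi G W). snd (snd (invi G W) x) \<in> carrier (G (fst (snd (invi G W) x)))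
     \<and> snd (snd (invi G W) x) \<noteq> \<one>\<^bsub>G (fst (snd (invi G W) x))\<^esub>"
  proof
    fix x assume "x \<in> fst (invi G W)"
    then obtain q where q: "q \<in> fst W" "x = - q" by (auto simp: invi_def)
    obtain n g where e: "snd W q = (n, g)" by (cases "snd W q")
    have g: "g \<in> carrier (G n)" "g \<noteq> \<one>\<^bsub>G n\<^esub>" using W q e by (auto simp: is_iword_def)
    interpret grp: group "G n" by (rule grp)
    have "inv\<^bsub>G n\<^esub> g \<noteq> \<one>\<^bsub>G n\<^esub>" using g by (metis grp.inv_inv grp.inv_one)
    then show "snd (snd (invi G W) x) \<in> carrier (G (fst (snd (invi G W) x)))
       \<and> snd (snd (invi G W) x) \<noteq> \<one>\<^bsub>G (fst (snd (invi G W) x))\<^esub>"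
      using q e g by (simp add: invi_def)
  qed
  ultimately show ?thesis unfolding finite_pos_iff_iword by blast
qed

definition emptyw :: "'a iword" where "emptyw = ({}, \<lambda>_. undefined)"

lemma rs_emptyw[simp]: "rs S emptyw = []"
  by (simp add: rs_def pos_def emptyw_def)

lemma is_iword_emptyw: "is_iword G emptyw"
  by (simp add: is_iword_def emptyw_def)

lemma rs_mono:
  assumes "is_iword G W" "finite S'" "S \<subseteq> S'"
  shows "rs S W = filter (\<lambda>l. fst l \<in> S) (rs S' W)"
proof -
  have "pos S W = {x \<in> pos S' W. fst (snd W x) \<in> S}" using assms(3) by (auto simp: pos_def)
  then show ?thesis unfolding rs_def using finite_pos[OF assms(1,2)]
    by (simp add: sorted_filter filter_map comp_def)
qed

lemma iword_eq_iff:
  assumes grp: "\<And>n. group (G n)" and "is_iword G W" "is_iword G V"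
  shows "iword_eq G W V \<longleftrightarrow> (\<forall>m. red G (rs {..<m} W) = red G (rs {..<m} V))"
proof -
  have "\<And>m. fp_eq G {..<m} (rs {..<m} W) (rs {..<m} V) \<longleftrightarrow> red G (rs {..<m} W) = red G (rs {..<m} V)"
    using fp_eq_iff[of G] grp rs_wd[OF assms(2)] rs_wd[OF assms(3)] by auto
  then show ?thesis by (simp add: iword_eq_def iword_restr_rs)
qed

lemma iword_eq_rs:
  assumes grp: "\<And>n. group (G n)" and W: "is_iword G W" and V: "is_iword G V"
    and eq: "iword_eq G W V" and S: "finite S"
  shows "red G (rs S W) = red G (rs S V)"
proof -
  obtain m where m: "S \<subseteq> {..<m}" using S finite_nat_bounded by blast
  have e: "red G (rs {..<m} W) = red G (rs {..<m} V)" using iword_eq_iff[OF grp W V] eq by blast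
  have wW: "wd G (rs {..<m} W)" and wV: "wd G (rs {..<m} V)"
    using rs_wd[OF W, of "{..<m}"] rs_wd[OF V, of "{..<m}"] by (auto simp: fp_words_iff)
  have "red G (rs S W) = red G (filter (\<lambda>l. fst l \<in> S) (red G (rs {..<m} W)))"
    using rs_mono[OF W _ m] red_filter[of G "rs {..<m} W" "\<lambda>n. n \<in> S"] grp wW by simp
  also have "\<dots> = red G (rs S V)"
    using rs_mono[OF V _ m] red_filter[of G "rs {..<m} V" "\<lambda>n. n \<in> S"] grp wV e by simp
  finally show ?thesis .
qed

lemma iword_eq_refl: "iword_eq G W W"
  by (simp add: iword_eq_def fp_eq_def)

lemma iword_eq_sym: "iword_eq G W V \<Longrightarrow> iword_eq G V W"
  unfolding iword_eq_def fp_eq_def by (blast intro: equivclp_sym)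

lemma iword_eq_trans: "iword_eq G W V \<Longrightarrow> iword_eq G V U \<Longrightarrow> iword_eq G W U"
  unfolding iword_eq_def fp_eq_def by (blast intro: equivclp_trans)


abbreviation "TP \<equiv> topologists_product"
abbreviation "cls \<equiv> iword_class"

lemma mem_cls: "V \<in> cls G W \<longleftrightarrow> is_iword G V \<and> iword_eq G W V"
  by (simp add: iword_class_def)

lemma cls_eq:
  assumes "is_iword G W" "is_iword G V"
  shows "cls G W = cls G V \<longleftrightarrow> iword_eq G W V"
proof
  assume "cls G W = cls G V"
  then have "V \<in> cls G W" using assms(2) iword_eq_refl by (simp add: mem_cls)
  then show "iword_eq G W V" by (simp add: mem_cls)
next
  assume "iword_eq G W V"
  then show "cls G W = cls G V" unfolding iword_class_def
    using iword_eq_sym iword_eq_trans by blast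
qed

lemma carrier_TP: "carrier (TP G) = cls G ` {W. is_iword G W}"
  by (simp add: topologists_product_def)

lemma one_TP: "\<one>\<^bsub>TP G\<^esub> = cls G emptyw"
  by (simp add: topologists_product_def emptyw_def)

lemma eq_by_rs:
  assumes "\<And>m. rs {..<m} W = rs {..<m} V"
  shows "iword_eq G W V"
  using assms by (simp add: iword_eq_def iword_restr_rs fp_eq_def)

lemma concat_cong:
  assumes grp: "\<And>n. group (G n)" and iw: "is_iword G W" "is_iword G V" "is_iword G W'" "is_iword G V'"
    and e: "iword_eq G W W'" "iword_eq G V V'"
  shows "iword_eq G (iword_concat W V) (iword_concat W' V')"
proof -
  have "red G (rs {..<k} (iword_concat W V)) = red G (rs {..<k} (iword_concat W' V'))" for k
  proof -
    have w: "wd G (rs {..<k} Z)" if "is_iword G Z" for Z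
      using rs_wd[OF that, of "{..<k}"] by (simp add: fp_words_iff)
    have "red G (rs {..<k} (iword_concat W V)) = red G (red G (rs {..<k} W) @ red G (rs {..<k} V))"
      using rs_concat[OF iw(1,2)] red_append2[of G] grp w iw by simp
    also have "\<dots> = red G (red G (rs {..<k} W') @ red G (rs {..<k} V'))"
      using iword_eq_rs[OF grp iw(1) iw(3) e(1)] iword_eq_rs[OF grp iw(2) iw(4) e(2)] by simp
    also have "\<dots> = red G (rs {..<k} (iword_concat W' V'))"
      using rs_concat[OF iw(3,4)] red_append2[of G] grp w iw by simp
    finally show ?thesis .
  qed
  then show ?thesis using iword_eq_iff[OF grp is_iword_concat[OF iw(1,2)] is_iword_concat[OF iw(3,4)]] by blast
qed

lemma mult_TP:
  assumes grp: "\<And>n. group (G n)" and iw: "is_iword G W" "is_iword G V"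
  shows "cls G W \<otimes>\<^bsub>TP G\<^esub> cls G V = cls G (iword_concat W V)"
proof -
  have "cls G W \<otimes>\<^bsub>TP G\<^esub> cls G V = {U. is_iword G U \<and> (\<exists>W'\<in>cls G W. \<exists>V'\<in>cls G V. iword_eq G (iword_concat W' V') U)}"
    by (simp add: topologists_product_def)
  also have "\<dots> = cls G (iword_concat W V)"
  proof -
    have "is_iword G U \<and> (\<exists>W'\<in>cls G W. \<exists>V'\<in>cls G V. iword_eq G (iword_concat W' V') U)
       \<longleftrightarrow> U \<in> cls G (iword_concat W V)" for U
    proof
      assume "is_iword G U \<and> (\<exists>W'\<in>cls G W. \<exists>V'\<in>cls G V. iword_eq G (iword_concat W' V') U)"
      then obtain W' V' where U: "is_iword G U" and W': "W' \<in> cls G W" and V': "V' \<in> cls G V"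
        and e: "iword_eq G (iword_concat W' V') U" by blast
      have "iword_eq G (iword_concat W V) (iword_concat W' V')"
        using concat_cong[OF grp iw] W' V' by (simp add: mem_cls)
      then show "U \<in> cls G (iword_concat W V)" using U iword_eq_trans[OF _ e] by (simp add: mem_cls)
    next
      assume U: "U \<in> cls G (iword_concat W V)"
      moreover have "W \<in> cls G W" "V \<in> cls G V" using iw by (simp_all add: mem_cls iword_eq_refl)
      ultimately show "is_iword G U \<and> (\<exists>W'\<in>cls G W. \<exists>V'\<in>cls G V. iword_eq G (iword_concat W' V') U)"
        unfolding mem_cls[of U] by blast
    qed
    then show ?thesis by blast
  qed
  finally show ?thesis .
qed

lemma group_TP:
  assumes grp: "\<And>n. group (G n)"
  shows "group (TP G)"
proof (rule groupI)
  fix x y assume "x \<in> carrier (TP G)" "y \<in> carrier (TP G)"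
  then obtain W V where "is_iword G W" "is_iword G V" "x = cls G W" "y = cls G V"
    by (auto simp: carrier_TP)
  then show "x \<otimes>\<^bsub>TP G\<^esub> y \<in> carrier (TP G)"
    using mult_TP[of G, OF grp] is_iword_concat[of G W V] by (auto simp: carrier_TP)
next
  show "\<one>\<^bsub>TP G\<^esub> \<in> carrier (TP G)" using is_iword_emptyw by (auto simp: carrier_TP one_TP)
next
  fix x y z assume "x \<in> carrier (TP G)" "y \<in> carrier (TP G)" "z \<in> carrier (TP G)"
  then obtain W V U where iw: "is_iword G W" "is_iword G V" "is_iword G U"
    and e: "x = cls G W" "y = cls G V" "z = cls G U"
    by (auto simp: carrier_TP)
  have "iword_eq G (iword_concat (iword_concat W V) U) (iword_concat W (iword_concat V U))"
    by (rule eq_by_rs) (simp add: rs_concat[of G] iw is_iword_concat[of G])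
  then show "x \<otimes>\<^bsub>TP G\<^esub> y \<otimes>\<^bsub>TP G\<^esub> z = x \<otimes>\<^bsub>TP G\<^esub> (y \<otimes>\<^bsub>TP G\<^esub> z)"
    using e iw by (simp add: mult_TP[of G, OF grp] is_iword_concat cls_eq)
next
  fix x assume "x \<in> carrier (TP G)"
  then obtain W where iw: "is_iword G W" and e: "x = cls G W" by (auto simp: carrier_TP)
  have "iword_eq G (iword_concat emptyw W) W"
    by (rule eq_by_rs) (simp add: rs_concat[of G] iw is_iword_emptyw)
  then show "\<one>\<^bsub>TP G\<^esub> \<otimes>\<^bsub>TP G\<^esub> x = x"
    using e iw by (simp add: one_TP mult_TP[of G, OF grp] is_iword_emptyw is_iword_concat cls_eq)
next
  fix x assume "x \<in> carrier (TP G)"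
  then obtain W where iw: "is_iword G W" and e: "x = cls G W" by (auto simp: carrier_TP)
  have iv: "is_iword G (invi G W)" by (rule is_iword_invi[OF grp iw])
  have "iword_eq G (iword_concat (invi G W) W) emptyw"
  proof -
    have "red G (rs {..<k} (iword_concat (invi G W) W)) = red G (rs {..<k} emptyw)" for k
    proof -
      have w: "wd G (rs {..<k} W)" using rs_wd[OF iw, of "{..<k}"] by (simp add: fp_words_iff)
      show ?thesis using rs_concat[OF iv iw] rs_invi[OF iw] act_invw1[of G "rs {..<k} W" "[]"] grp w
        by (simp add: red_def)
    qed
    then show ?thesis using iword_eq_iff[OF grp is_iword_concat[OF iv iw] is_iword_emptyw] by blast
  qed
  then have "cls G (invi G W) \<otimes>\<^bsub>TP G\<^esub> x = \<one>\<^bsub>TP G\<^esub>"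
    using e iw iv by (simp add: one_TP mult_TP[of G, OF grp] is_iword_emptyw is_iword_concat cls_eq)
  moreover have "cls G (invi G W) \<in> carrier (TP G)" using iv by (auto simp: carrier_TP)
  ultimately show "\<exists>y\<in>carrier (TP G). y \<otimes>\<^bsub>TP G\<^esub> x = \<one>\<^bsub>TP G\<^esub>" by blast
qed

lemma inv_TP:
  assumes grp: "\<And>n. group (G n)" and iw: "is_iword G W"
  shows "inv\<^bsub>TP G\<^esub> (cls G W) = cls G (invi G W)"
proof -
  interpret T: group "TP G" by (rule group_TP[OF grp])
  have iv: "is_iword G (invi G W)" by (rule is_iword_invi[OF grp iw])
  have "iword_eq G (iword_concat (invi G W) W) emptyw"
  proof -
    have "red G (rs {..<k} (iword_concat (invi G W) W)) = red G (rs {..<k} emptyw)" for k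
    proof -
      have w: "wd G (rs {..<k} W)" using rs_wd[OF iw, of "{..<k}"] by (simp add: fp_words_iff)
      show ?thesis using rs_concat[OF iv iw] rs_invi[OF iw] act_invw1[of G "rs {..<k} W" "[]"] grp w
        by (simp add: red_def)
    qed
    then show ?thesis using iword_eq_iff[OF grp is_iword_concat[OF iv iw] is_iword_emptyw] by blast
  qed
  then have "cls G (invi G W) \<otimes>\<^bsub>TP G\<^esub> cls G W = \<one>\<^bsub>TP G\<^esub>"
    using iw iv by (simp add: one_TP mult_TP[of G, OF grp] is_iword_emptyw is_iword_concat cls_eq)
  then show ?thesis using T.inv_equality iw iv by (auto simp: carrier_TP)
qed


definition subw :: "'a iword \<Rightarrow> rat set \<Rightarrow> 'a iword" where
  "subw W B = (fst W \<inter> B, snd W)"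

lemma pos_subw: "pos S (subw W B) = pos S W \<inter> B"
  by (auto simp: pos_def subw_def)

lemma is_iword_subw: "is_iword G W \<Longrightarrow> is_iword G (subw W B)"
  by (auto simp: is_iword_def subw_def intro: finite_subset[rotated])

lemma rs_subw:
  assumes "is_iword G W" "finite S"
  shows "rs S (subw W B) = map (snd W) (sorted_list_of_set {x \<in> pos S W. x \<in> B})"
proof -
  have "pos S W \<inter> B = {x \<in> pos S W. x \<in> B}" by auto
  then show ?thesis unfolding rs_def pos_subw by (simp add: subw_def)
qed

definition dF :: "nat set \<Rightarrow> 'a iword \<Rightarrow> 'a iword" where
  "dF F W = subw W {x. fst (snd W x) \<notin> F}"

lemma rs_dF:
  assumes "is_iword G W" "finite S"
  shows "rs S (dF F W) = filter (\<lambda>l. fst l \<notin> F) (rs S W)"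
proof -
  have "pos S (dF F W) = {x \<in> pos S W. fst (snd W x) \<notin> F}"
    unfolding dF_def pos_subw by auto
  then show ?thesis using finite_pos[OF assms]
    by (simp add: rs_def sorted_filter filter_map comp_def dF_def subw_def)
qed

definition trivF :: "(nat \<Rightarrow> ('a, 'c) monoid_scheme) \<Rightarrow> nat set \<Rightarrow> 'a iword \<Rightarrow> bool" where
  "trivF G F W \<longleftrightarrow> (\<forall>m. red G (filter (\<lambda>l. fst l \<notin> F) (rs {..<m} W)) = [])"

lemma wd_rs: "is_iword G W \<Longrightarrow> finite S \<Longrightarrow> wd G (rs S W)"
  using rs_wd[of G W S] by (simp add: fp_words_iff)

lemma wd_filter: "wd G xs \<Longrightarrow> wd G (filter Q xs)"
  by (auto simp: wd_def)

lemma trivF_cong: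
  assumes grp: "\<And>n. group (G n)" and W: "is_iword G W" and V: "is_iword G V" and e: "iword_eq G W V"
  shows "trivF G F W \<longleftrightarrow> trivF G F V"
proof -
  have "red G (filter (\<lambda>l. fst l \<notin> F) (rs {..<m} W)) = red G (filter (\<lambda>l. fst l \<notin> F) (rs {..<m} V))" for m
  proof -
    have "red G (filter (\<lambda>l. fst l \<notin> F) (rs {..<m} W)) = red G (filter (\<lambda>l. fst l \<notin> F) (red G (rs {..<m} W)))"
      using red_filter[of G "rs {..<m} W" "\<lambda>n. n \<notin> F"] grp wd_rs[OF W] by simp
    also have "\<dots> = red G (filter (\<lambda>l. fst l \<notin> F) (red G (rs {..<m} V)))"
      using iword_eq_rs[OF grp W V e] by simp
    also have "\<dots> = red G (filter (\<lambda>l. fst l \<notin> F) (rs {..<m} V))"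
      using red_filter[of G "rs {..<m} V" "\<lambda>n. n \<notin> F"] grp wd_rs[OF V] by simp
    finally show ?thesis .
  qed
  then show ?thesis by (simp add: trivF_def)
qed

lemma red_filter_triv:
  assumes grp: "\<And>n. group (G n)" and w: "wd G xs" and t: "red G (filter (\<lambda>l. fst l \<notin> F) xs) = []"
    and sub: "F \<subseteq> F'"
  shows "red G (filter (\<lambda>l. fst l \<notin> F') xs) = []"
proof -
  have "filter (\<lambda>l. fst l \<notin> F') xs = filter (\<lambda>l. fst l \<notin> F') (filter (\<lambda>l. fst l \<notin> F) xs)"
    using sub by (induction xs) auto
  then have "red G (filter (\<lambda>l. fst l \<notin> F') xs) = red G (filter (\<lambda>l. fst l \<notin> F') (red G (filter (\<lambda>l. fst l \<notin> F) xs)))"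
    using red_filter[of G "filter (\<lambda>l. fst l \<notin> F) xs" "\<lambda>n. n \<notin> F'"] grp wd_filter[OF w] by simp
  then show ?thesis using t by (simp add: red_def)
qed

lemma trivF_mono:
  assumes grp: "\<And>n. group (G n)" and W: "is_iword G W" and t: "trivF G F W" and sub: "F \<subseteq> F'"
  shows "trivF G F' W"
  using red_filter_triv[OF grp wd_rs[OF W] _ sub] t by (simp add: trivF_def)

lemma red_app_triv:
  assumes grp: "\<And>n. group (G n)" and "wd G xs" "wd G ys" "red G xs = []" "red G ys = []"
  shows "red G (xs @ ys) = []"
  using red_append2[of G xs ys] assms by (simp add: red_def)

lemma red_conj_triv:
  assumes grp: "\<And>n. group (G n)" and a: "wd G as" and b: "wd G bs" and t: "red G bs = []"
  shows "red G (as @ bs @ invw G as) = []"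
proof -
  have "act G bs (red G (invw G as)) = act G (red G bs) (red G (invw G as))"
    using act_red[of G bs "red G (invw G as)"] grp b reduced_red[of G "invw G as"] wd_invw[of G as] a by simp
  then have e: "act G bs (red G (invw G as)) = red G (invw G as)" using t by simp
  have "red G (as @ bs @ invw G as) = act G as (act G bs (red G (invw G as)))"
    by (simp add: red_def)
  also have "\<dots> = act G as (act G (invw G as) [])" using e by (simp add: red_def)
  also have "\<dots> = []" using act_invw2[of G as "[]"] grp a by simp
  finally show ?thesis .
qed

lemma filter_invw: "filter (\<lambda>l. Q (fst l)) (invw G xs) = invw G (filter (\<lambda>l. Q (fst l)) xs)"
  by (induction xs) auto

lemma red_invw_triv:
  assumes grp: "\<And>n. group (G n)" and a: "wd G as" and t: "red G as = []"
  shows "red G (invw G as) = []"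
  using act_invw1[of G as "[]"] grp a t by (simp add: red_def)

definition KK :: "(nat \<Rightarrow> ('a, 'c) monoid_scheme) \<Rightarrow> 'a iword set set" where
  "KK G = {a \<in> carrier (TP G). \<exists>W F. is_iword G W \<and> a = cls G W \<and> finite F \<and> trivF G F W}"

lemma is_iword_dF: "is_iword G W \<Longrightarrow> is_iword G (dF F W)"
  by (simp add: dF_def is_iword_subw)

lemma KK_rep:
  assumes grp: "\<And>n. group (G n)" and a: "a \<in> KK G" and W: "is_iword G W" and e: "a = cls G W"
  shows "\<exists>F. finite F \<and> trivF G F W"
proof -
  obtain V F where V: "is_iword G V" "a = cls G V" "finite F" "trivF G F V" using a by (auto simp: KK_def)
  have "iword_eq G V W" using cls_eq[OF V(1) W] V(2) e by simp
  then show ?thesis using trivF_cong[OF grp V(1) W] V by blast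
qed

lemma rs_conj:
  assumes U: "is_iword G U" and W: "is_iword G W" and grp: "\<And>n. group (G n)" and S: "finite S"
  shows "rs S (iword_concat (iword_concat U W) (invi G U)) = rs S U @ rs S W @ invw G (rs S U)"
  using rs_concat[of G _ _ S] is_iword_concat[of G] is_iword_invi[of G] rs_invi[of G U S] assms by simp

lemma trivF_conj:
  assumes grp: "\<And>n. group (G n)" and U: "is_iword G U" and W: "is_iword G W" and t: "trivF G F W"
  shows "trivF G F (iword_concat (iword_concat U W) (invi G U))"
  unfolding trivF_def
proof
  fix m
  let ?f = "filter (\<lambda>l. fst l \<notin> F)"
  have "?f (rs {..<m} (iword_concat (iword_concat U W) (invi G U))) = ?f (rs {..<m} U) @ ?f (rs {..<m} W) @ invw G (?f (rs {..<m} U))"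
    using rs_conj[OF U W grp] filter_invw[of "\<lambda>n. n \<notin> F" G] by simp
  moreover have "red G (?f (rs {..<m} U) @ ?f (rs {..<m} W) @ invw G (?f (rs {..<m} U))) = []"
    by (rule red_conj_triv[OF grp]) (use wd_filter[OF wd_rs[OF U]] wd_filter[OF wd_rs[OF W]] t in \<open>auto simp: trivF_def\<close>)
  ultimately show "red G (?f (rs {..<m} (iword_concat (iword_concat U W) (invi G U)))) = []" by simp
qed

lemma trivF_concat:
  assumes grp: "\<And>n. group (G n)" and U: "is_iword G U" and W: "is_iword G W" and t: "trivF G F U" "trivF G F W"
  shows "trivF G F (iword_concat U W)"
  unfolding trivF_def
proof
  fix m
  let ?f = "filter (\<lambda>l. fst l \<notin> F)"
  have "?f (rs {..<m} (iword_concat U W)) = ?f (rs {..<m} U) @ ?f (rs {..<m} W)"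
    using rs_concat[OF U W] by simp
  moreover have "red G (?f (rs {..<m} U) @ ?f (rs {..<m} W)) = []"
    by (rule red_app_triv[OF grp]) (use wd_filter[OF wd_rs[OF U]] wd_filter[OF wd_rs[OF W]] t in \<open>auto simp: trivF_def\<close>)
  ultimately show "red G (?f (rs {..<m} (iword_concat U W))) = []" by simp
qed

lemma trivF_invi:
  assumes grp: "\<And>n. group (G n)" and U: "is_iword G U" and t: "trivF G F U"
  shows "trivF G F (invi G U)"
  unfolding trivF_def
proof
  fix m
  let ?f = "filter (\<lambda>l. fst l \<notin> F)"
  have "?f (rs {..<m} (invi G U)) = invw G (?f (rs {..<m} U))"
    using rs_invi[OF U] filter_invw[of "\<lambda>n. n \<notin> F" G] by simp
  moreover have "red G (invw G (?f (rs {..<m} U))) = []"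
    by (rule red_invw_triv[OF grp]) (use wd_filter[OF wd_rs[OF U]] t in \<open>auto simp: trivF_def\<close>)
  ultimately show "red G (?f (rs {..<m} (invi G U))) = []" by simp
qed

lemma KK_normal:
  assumes grp: "\<And>n. group (G n)"
  shows "KK G \<lhd> TP G"
proof -
  interpret T: group "TP G" by (rule group_TP[OF grp])
  have sub: "subgroup (KK G) (TP G)"
  proof (rule T.subgroupI)
    show "KK G \<subseteq> carrier (TP G)" by (auto simp: KK_def)
    have "trivF G {} emptyw" by (simp add: trivF_def red_def)
    moreover have "cls G emptyw \<in> carrier (TP G)" using is_iword_emptyw[of G] by (auto simp: carrier_TP)
    ultimately have "\<one>\<^bsub>TP G\<^esub> \<in> KK G" using is_iword_emptyw[of G]
      unfolding KK_def one_TP by blast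
    then show "KK G \<noteq> {}" by blast
  next
    fix a assume a: "a \<in> KK G"
    then obtain W F where W: "is_iword G W" "a = cls G W" "finite F" "trivF G F W" by (auto simp: KK_def)
    have "inv\<^bsub>TP G\<^esub> a = cls G (invi G W)" using inv_TP[OF grp W(1)] W(2) by simp
    then show "inv\<^bsub>TP G\<^esub> a \<in> KK G" using W trivF_invi[OF grp W(1) W(4)] is_iword_invi[OF grp W(1)]
      unfolding KK_def carrier_TP by blast
  next
    fix a b assume a: "a \<in> KK G" and b: "b \<in> KK G"
    obtain W F where W: "is_iword G W" "a = cls G W" "finite F" "trivF G F W" using a by (auto simp: KK_def)
    obtain V F' where V: "is_iword G V" "b = cls G V" "finite F'" "trivF G F' V" using b by (auto simp: KK_def)
    have t: "trivF G (F \<union> F') W" "trivF G (F \<union> F') V"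
      using trivF_mono[OF grp W(1) W(4)] trivF_mono[OF grp V(1) V(4)] by auto
    have "a \<otimes>\<^bsub>TP G\<^esub> b = cls G (iword_concat W V)" using mult_TP[of G, OF grp W(1) V(1)] W V by simp
    then show "a \<otimes>\<^bsub>TP G\<^esub> b \<in> KK G"
      using trivF_concat[OF grp W(1) V(1) t] is_iword_concat[OF W(1) V(1)] W(3) V(3)
      unfolding KK_def carrier_TP by blast
  qed
  have conj: "g \<otimes>\<^bsub>TP G\<^esub> a \<otimes>\<^bsub>TP G\<^esub> inv\<^bsub>TP G\<^esub> g \<in> KK G"
    if g: "g \<in> carrier (TP G)" and a: "a \<in> KK G" for g a
  proof -
    obtain U where U: "is_iword G U" "g = cls G U" using g by (auto simp: carrier_TP)
    obtain W F where W: "is_iword G W" "a = cls G W" "finite F" "trivF G F W" using a by (auto simp: KK_def)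
    have e: "g \<otimes>\<^bsub>TP G\<^esub> a \<otimes>\<^bsub>TP G\<^esub> inv\<^bsub>TP G\<^esub> g = cls G (iword_concat (iword_concat U W) (invi G U))"
      using U W inv_TP[OF grp U(1)] mult_TP[of G, OF grp] is_iword_concat[of G] is_iword_invi[OF grp U(1)] by simp
    have "is_iword G (iword_concat (iword_concat U W) (invi G U))"
      using is_iword_concat[of G] is_iword_invi[OF grp U(1)] U W by simp
    then show ?thesis using e trivF_conj[OF grp U(1) W(1) W(4)] W(3)
      unfolding KK_def carrier_TP by blast
  qed
  show ?thesis unfolding T.normal_inv_iff using sub conj by blast
qed

lemma rs_letters: "finite (pos S W) \<Longrightarrow> l \<in> set (rs S W) \<Longrightarrow> \<exists>x\<in>pos S W. l = snd W x"
  by (auto simp: rs_def)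

lemma free_KK:
  assumes grp: "\<And>n. group (G n)"
  shows "free_part G \<subseteq> KK G"
proof
  fix a assume a: "a \<in> free_part G"
  then obtain W where W: "W \<in> a" "finite (fst W)" and ac: "a \<in> carrier (TP G)" by (auto simp: free_part_def)
  obtain W0 where W0: "is_iword G W0" "a = cls G W0" using ac by (auto simp: carrier_TP)
  have iw: "is_iword G W" "iword_eq G W0 W" using W(1) W0 by (auto simp: mem_cls)
  have aW: "a = cls G W" using cls_eq[OF W0(1) iw(1)] iw W0 by simp
  define F where "F = (\<lambda>x. fst (snd W x)) ` fst W"
  have fF: "finite F" using W(2) by (simp add: F_def)
  have "trivF G F W" unfolding trivF_def
  proof
    fix m
    have "filter (\<lambda>l. fst l \<notin> F) (rs {..<m} W) = []"
    proof (rule filter_False, rule ballI)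
      fix l assume "l \<in> set (rs {..<m} W)"
      then obtain x where "x \<in> pos {..<m} W" "l = snd W x"
        using rs_letters[OF finite_pos[OF iw(1) finite_lessThan]] by blast
      then show "\<not> fst l \<notin> F" by (auto simp: F_def pos_def)
    qed
    then show "red G (filter (\<lambda>l. fst l \<notin> F) (rs {..<m} W)) = []" by (simp add: red_def)
  qed
  then show "a \<in> KK G" using ac aW iw(1) fF unfolding KK_def by blast
qed

lemma N_sub_KK:
  assumes grp: "\<And>n. group (G n)"
  shows "normal_closure (TP G) (free_part G) \<subseteq> KK G"
proof -
  interpret T: group "TP G" by (rule group_TP[OF grp])
  interpret Kn: normal "KK G" "TP G" by (rule KK_normal[OF grp])
  show ?thesis unfolding normal_closure_def
  proof (rule T.generate_subgroup_incl)
    show "subgroup (KK G) (TP G)" by (rule Kn.subgroup_axioms)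
    show "{g \<otimes>\<^bsub>TP G\<^esub> s \<otimes>\<^bsub>TP G\<^esub> inv\<^bsub>TP G\<^esub> g |g s. g \<in> carrier (TP G) \<and> s \<in> free_part G} \<subseteq> KK G"
    proof (rule subsetI)
      fix y assume "y \<in> {g \<otimes>\<^bsub>TP G\<^esub> s \<otimes>\<^bsub>TP G\<^esub> inv\<^bsub>TP G\<^esub> g |g s. g \<in> carrier (TP G) \<and> s \<in> free_part G}"
      then obtain g s where "y = g \<otimes>\<^bsub>TP G\<^esub> s \<otimes>\<^bsub>TP G\<^esub> inv\<^bsub>TP G\<^esub> g" "g \<in> carrier (TP G)" "s \<in> free_part G"
        by blast
      then show "y \<in> KK G" using free_KK[of G, OF grp] Kn.inv_op_closed2[of g s] by blast
    qed
  qed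
qed


lemma split3:
  assumes W: "is_iword G W" and S: "finite S"
  shows "rs S W = rs S (subw W {y. y < x}) @ rs S (subw W {x}) @ rs S (subw W {y. x < y})"
proof -
  let ?A = "pos S W"
  have fA: "finite ?A" by (rule finite_pos[OF W S])
  have e: "?A = {y \<in> ?A. y \<in> {y. y < x}} \<union> ({y \<in> ?A. y \<in> {x}} \<union> {y \<in> ?A. y \<in> {y. x < y}})"
    by auto
  have "sorted_list_of_set ?A = sorted_list_of_set {y \<in> ?A. y \<in> {y. y < x}} @
     (sorted_list_of_set {y \<in> ?A. y \<in> {x}} @ sorted_list_of_set {y \<in> ?A. y \<in> {y. x < y}})"
    apply (subst e)
    apply (subst sorted_union)
       apply (use fA in auto)[3]
    apply (subst sorted_union)
       apply (use fA in auto)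
    done
  then show ?thesis unfolding rs_subw[OF W S] by (simp add: rs_def)
qed

lemma N_subgroup:
  assumes grp: "\<And>n. group (G n)"
  shows "subgroup (normal_closure (TP G) (free_part G)) (TP G)"
proof -
  interpret T: group "TP G" by (rule group_TP[OF grp])
  show ?thesis unfolding normal_closure_def
    by (rule T.generate_is_subgroup) (auto simp: free_part_def)
qed

lemma KK_sub_N_aux:
  assumes grp: "\<And>n. group (G n)" and fF: "finite F"
  shows "\<forall>W. is_iword G W \<and> trivF G F W \<and> card (pos F W) = k \<longrightarrow> cls G W \<in> normal_closure (TP G) (free_part G)"
proof (induction k)
  interpret T: group "TP G" by (rule group_TP[OF grp])
  interpret N: subgroup "normal_closure (TP G) (free_part G)" "TP G" by (rule N_subgroup[OF grp])
  case 0
  show ?case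
  proof (intro allI impI)
    fix W assume h: "is_iword G W \<and> trivF G F W \<and> card (pos F W) = 0"
    then have W: "is_iword G W" and t: "trivF G F W" and c: "card (pos F W) = 0" by auto
    have pe: "pos F W = {}" using c finite_pos[OF W fF] by simp
    have "fst W \<inter> {x. fst (snd W x) \<notin> F} = fst W" using pe by (auto simp: pos_def)
    then have dW: "dF F W = W" by (simp add: dF_def subw_def)
    have "red G (rs {..<m} W) = red G (rs {..<m} emptyw)" for m
    proof -
      have "rs {..<m} W = filter (\<lambda>l. fst l \<notin> F) (rs {..<m} W)"
        using rs_dF[OF W finite_lessThan, of m F] unfolding dW .
      then have "red G (rs {..<m} W) = red G (filter (\<lambda>l. fst l \<notin> F) (rs {..<m} W))" by (rule arg_cong)
      then have "red G (rs {..<m} W) = []" using t unfolding trivF_def by simp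
      then show ?thesis by (simp add: red_def)
    qed
    then have "iword_eq G W emptyw" using iword_eq_iff[OF grp W is_iword_emptyw] by blast
    then have "cls G W = \<one>\<^bsub>TP G\<^esub>" using cls_eq[OF W is_iword_emptyw] by (simp add: one_TP)
    then show "cls G W \<in> normal_closure (TP G) (free_part G)" using N.one_closed by simp
  qed
next
  interpret T: group "TP G" by (rule group_TP[OF grp])
  interpret N: subgroup "normal_closure (TP G) (free_part G)" "TP G" by (rule N_subgroup[OF grp])
  case (Suc k)
  show ?case
  proof (intro allI impI)
    fix W assume h: "is_iword G W \<and> trivF G F W \<and> card (pos F W) = Suc k"
    then have W: "is_iword G W" and t: "trivF G F W" and c: "card (pos F W) = Suc k" by auto
    have fp: "finite (pos F W)" by (rule finite_pos[OF W fF])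
    have ne: "pos F W \<noteq> {}" using c by auto
    define x where "x = Max (pos F W)"
    have xin: "x \<in> pos F W" using Max_in[OF fp ne] x_def by simp
    have xmax: "\<And>y. y \<in> pos F W \<Longrightarrow> y \<le> x" using Max_ge[OF fp] x_def by simp
    define W1 where "W1 = subw W {y. y < x}"
    define A where "A = subw W {x}"
    define V where "V = subw W {y. x < y}"
    have iw: "is_iword G W1" "is_iword G A" "is_iword G V"
      using is_iword_subw[OF W] by (simp_all add: W1_def A_def V_def)
    have pV: "pos F V = {}" using xmax by (force simp: V_def pos_subw)
    have pW1: "pos F W1 = pos F W - {x}" using xmax by (force simp: W1_def pos_subw)
    define U where "U = iword_concat W1 V"
    have iU: "is_iword G U" using is_iword_concat[OF iw(1) iw(3)] by (simp add: U_def)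
    have "pos F U = neg_emb ` (pos F W - {x})" by (simp add: U_def pos_concat pW1 pV)
    then have cU: "card (pos F U) = k"
      using card_image[OF strict_mono_imp_inj_on[OF neg_emb_mono]] c xin fp by simp
    have tU: "trivF G F U" unfolding trivF_def
    proof
      fix m
      let ?f = "filter (\<lambda>l. fst l \<notin> F)"
      have "?f (rs {..<m} A) = []"
      proof (rule filter_False, rule ballI)
        fix l assume "l \<in> set (rs {..<m} A)"
        then obtain y where "y \<in> pos {..<m} A" "l = snd A y"
          using rs_letters[OF finite_pos[OF iw(2) finite_lessThan]] by blast
        then show "\<not> fst l \<notin> F" using xin by (auto simp: A_def pos_subw subw_def pos_def)
      qed
      then have "?f (rs {..<m} U) = ?f (rs {..<m} W)"
        using split3[OF W finite_lessThan, of m x] rs_concat[OF iw(1) iw(3) finite_lessThan]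
        by (simp add: U_def W1_def A_def V_def)
      then show "red G (?f (rs {..<m} U)) = []" using t by (simp add: trivF_def)
    qed
    have cUN: "cls G U \<in> normal_closure (TP G) (free_part G)" using Suc.IH iU tU cU by blast
    have cl: "cls G W1 \<in> carrier (TP G)" "cls G A \<in> carrier (TP G)" "cls G V \<in> carrier (TP G)"
      using iw by (auto simp: carrier_TP)
    have "A \<in> cls G A" using iw(2) by (simp add: mem_cls iword_eq_refl)
    moreover have "finite (fst A)" by (simp add: A_def subw_def)
    ultimately have fA: "cls G A \<in> free_part G" using cl(2) unfolding free_part_def by blast
    define g where "g = inv\<^bsub>TP G\<^esub> cls G V"
    have gc: "g \<in> carrier (TP G)" using cl(3) by (simp add: g_def)
    have gen: "g \<otimes>\<^bsub>TP G\<^esub> cls G A \<otimes>\<^bsub>TP G\<^esub> inv\<^bsub>TP G\<^esub> g \<in> normal_closure (TP G) (free_part G)"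
      unfolding normal_closure_def using gc fA by (blast intro: generate.incl)
    have eW: "cls G W = cls G W1 \<otimes>\<^bsub>TP G\<^esub> cls G A \<otimes>\<^bsub>TP G\<^esub> cls G V"
    proof -
      have "iword_eq G (iword_concat (iword_concat W1 A) V) W"
      proof (rule eq_by_rs)
        fix m
        have sp: "rs {..<m} W = rs {..<m} W1 @ rs {..<m} A @ rs {..<m} V"
          unfolding W1_def A_def V_def by (rule split3[OF W finite_lessThan])
        show "rs {..<m} (iword_concat (iword_concat W1 A) V) = rs {..<m} W"
          using rs_concat[OF is_iword_concat[OF iw(1,2)] iw(3) finite_lessThan] rs_concat[OF iw(1,2) finite_lessThan] sp
          by simp
      qed
      then have "cls G (iword_concat (iword_concat W1 A) V) = cls G W"
        using cls_eq[OF is_iword_concat[OF is_iword_concat[OF iw(1,2)] iw(3)] W] by simp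
      then show ?thesis using mult_TP[of G, OF grp] iw is_iword_concat[OF iw(1,2)] by simp
    qed
    have eU: "cls G U = cls G W1 \<otimes>\<^bsub>TP G\<^esub> cls G V"
      using mult_TP[of G, OF grp iw(1) iw(3)] by (simp add: U_def)
    have canc: "\<And>v z. v \<in> carrier (TP G) \<Longrightarrow> z \<in> carrier (TP G) \<Longrightarrow>
        v \<otimes>\<^bsub>TP G\<^esub> (inv\<^bsub>TP G\<^esub> v \<otimes>\<^bsub>TP G\<^esub> z) = z"
      by (simp add: T.m_assoc[symmetric])
    have "cls G W = cls G U \<otimes>\<^bsub>TP G\<^esub> (g \<otimes>\<^bsub>TP G\<^esub> cls G A \<otimes>\<^bsub>TP G\<^esub> inv\<^bsub>TP G\<^esub> g)"
      using cl canc by (simp add: eW eU g_def T.m_assoc)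
    then show "cls G W \<in> normal_closure (TP G) (free_part G)"
      using N.m_closed[OF cUN gen] by simp
  qed
qed

lemma KK_eq_N:
  assumes grp: "\<And>n. group (G n)"
  shows "normal_closure (TP G) (free_part G) = KK G"
proof
  show "normal_closure (TP G) (free_part G) \<subseteq> KK G" by (rule N_sub_KK[OF grp])
next
  show "KK G \<subseteq> normal_closure (TP G) (free_part G)"
  proof
    fix a assume "a \<in> KK G"
    then obtain W F where W: "is_iword G W" "a = cls G W" "finite F" "trivF G F W" by (auto simp: KK_def)
    have "\<forall>W'. is_iword G W' \<and> trivF G F W' \<and> card (pos F W') = card (pos F W) \<longrightarrow> cls G W' \<in> normal_closure (TP G) (free_part G)"
      by (rule KK_sub_N_aux[of G F "card (pos F W)", OF grp W(3)])
    then show "a \<in> normal_closure (TP G) (free_part G)" using W by blast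
  qed
qed


definition valid :: "('s::countable \<Rightarrow> 's \<Rightarrow> bool) \<Rightarrow> nat \<Rightarrow> bool" where
  "valid R m \<longleftrightarrow> m \<in> range (to_nat :: 's \<Rightarrow> nat)"

lemma valid_to_nat[simp]: "valid (R::'s::countable \<Rightarrow> 's \<Rightarrow> bool) (to_nat (a::'s))"
  unfolding valid_def by (rule rangeI)

definition newv :: "('s::countable \<Rightarrow> 's \<Rightarrow> bool) \<Rightarrow> nat \<Rightarrow> rat list \<Rightarrow> rat" where
  "newv R n vs = (let lo = (\<lambda>m. vs ! m) ` {m. m < n \<and> valid R m \<and> R (from_nat m) (from_nat n)};
                      hi = (\<lambda>m. vs ! m) ` {m. m < n \<and> valid R m \<and> R (from_nat n) (from_nat m)} in
     if lo = {} then (if hi = {} then 0 else Min hi - 1)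
     else (if hi = {} then Max lo + 1 else (Max lo + Min hi) / 2))"

primrec vals :: "('s::countable \<Rightarrow> 's \<Rightarrow> bool) \<Rightarrow> nat \<Rightarrow> rat list" where
  "vals R 0 = []"
| "vals R (Suc n) = vals R n @ [newv R n (vals R n)]"

lemma length_vals[simp]: "length (vals R n) = n"
  by (induction n) auto

lemma vals_prefix: "m < n \<Longrightarrow> vals R n ! m = vals R (Suc m) ! m"
proof (induction n)
  case 0 then show ?case by simp
next
  case (Suc n)
  then show ?case by (cases "m = n") (auto simp: nth_append less_Suc_eq)
qed

lemma newv_bounds:
  fixes R :: "'s::countable \<Rightarrow> 's \<Rightarrow> bool"
  assumes trans: "\<forall>a b c. R a b \<longrightarrow> R b c \<longrightarrow> R a c"
    and inv: "\<forall>i j. i < n \<longrightarrow> j < n \<longrightarrow> valid R i \<longrightarrow> valid R j \<longrightarrow>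
        R (from_nat i) (from_nat j) \<longrightarrow> vs ! i < vs ! j"
  shows "\<And>i. i < n \<Longrightarrow> valid R i \<Longrightarrow> R (from_nat i) (from_nat n) \<Longrightarrow> vs ! i < newv R n vs"
    and "\<And>i. i < n \<Longrightarrow> valid R i \<Longrightarrow> R (from_nat n) (from_nat i) \<Longrightarrow> newv R n vs < vs ! i"
proof -
  define L where "L = {m. m < n \<and> valid R m \<and> R (from_nat m) (from_nat n)}"
  define U where "U = {m. m < n \<and> valid R m \<and> R (from_nat n) (from_nat m)}"
  define lo where "lo = (\<lambda>m. vs ! m) ` L"
  define hi where "hi = (\<lambda>m. vs ! m) ` U"
  have fin: "finite lo" "finite hi" unfolding lo_def hi_def L_def U_def by auto
  have nv: "newv R n vs = (if lo = {} then (if hi = {} then 0 else Min hi - 1)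
     else (if hi = {} then Max lo + 1 else (Max lo + Min hi) / 2))"
    unfolding newv_def lo_def hi_def L_def U_def Let_def by simp
  have lohi: "Max lo < Min hi" if ne1: "lo \<noteq> {}" and ne2: "hi \<noteq> {}"
  proof -
    obtain a where a: "a \<in> L" "Max lo = vs ! a" using Max_in[OF fin(1) ne1] unfolding lo_def by auto
    obtain b where b: "b \<in> U" "Min hi = vs ! b" using Min_in[OF fin(2) ne2] unfolding hi_def by auto
    have "R (from_nat a) (from_nat b)" using a b trans unfolding L_def U_def by blast
    then show ?thesis using a b inv unfolding L_def U_def by auto
  qed
  show "vs ! i < newv R n vs" if "i < n" "valid R i" "R (from_nat i) (from_nat n)" for i
  proof -
    have iL: "vs ! i \<in> lo" using that unfolding lo_def L_def by auto
    then have ne: "lo \<noteq> {}" by auto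
    have le: "vs ! i \<le> Max lo" using Max_ge[OF fin(1) iL] .
    show ?thesis
    proof (cases "hi = {}")
      case True then show ?thesis using nv ne le by simp
    next
      case False then show ?thesis using nv ne le lohi[OF ne False] by simp
    qed
  qed
  show "newv R n vs < vs ! i" if "i < n" "valid R i" "R (from_nat n) (from_nat i)" for i
  proof -
    have iU: "vs ! i \<in> hi" using that unfolding hi_def U_def by auto
    then have ne: "hi \<noteq> {}" by auto
    have le: "Min hi \<le> vs ! i" using Min_le[OF fin(2) iU] .
    show ?thesis
    proof (cases "lo = {}")
      case True then show ?thesis using nv ne le by simp
    next
      case False then show ?thesis using nv ne le lohi[OF False ne] by simp
    qed
  qed
qed

lemma vals_mono:
  fixes R :: "'s::countable \<Rightarrow> 's \<Rightarrow> bool"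
  assumes trans: "\<And>a b c. R a b \<Longrightarrow> R b c \<Longrightarrow> R a c" and irr: "\<And>a. \<not> R a a"
  shows "\<And>i j. i < n \<Longrightarrow> j < n \<Longrightarrow> valid R i \<Longrightarrow> valid R j \<Longrightarrow>
        R (from_nat i) (from_nat j) \<Longrightarrow> vals R n ! i < vals R n ! j"
proof (induction n)
  case 0 then show ?case by simp
next
  case (Suc n)
  have t: "\<forall>a b c. R a b \<longrightarrow> R b c \<longrightarrow> R a c" using trans by blast
  have iv: "\<forall>i j. i < n \<longrightarrow> j < n \<longrightarrow> valid R i \<longrightarrow> valid R j \<longrightarrow>
        R (from_nat i) (from_nat j) \<longrightarrow> vals R n ! i < vals R n ! j" using Suc.IH by blast
  note b = newv_bounds[of R n "vals R n", OF t iv]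
  show ?case
  proof (cases "i = n")
    case True
    then have "j < n" using Suc.prems irr by (metis less_SucE)
    then show ?thesis using True b(2)[of j] Suc.prems by (simp add: nth_append)
  next
    case False
    then have i: "i < n" using Suc.prems by simp
    show ?thesis
    proof (cases "j = n")
      case True then show ?thesis using i b(1)[of i] Suc.prems by (simp add: nth_append)
    next
      case False
      then have "j < n" using Suc.prems by simp
      then show ?thesis using i Suc.IH Suc.prems by (simp add: nth_append)
    qed
  qed
qed

lemma countable_order_embedding:
  fixes R :: "'s::countable \<Rightarrow> 's \<Rightarrow> bool"
  assumes irr: "\<And>a. \<not> R a a" and trans: "\<And>a b c. R a b \<Longrightarrow> R b c \<Longrightarrow> R a c"
  shows "\<exists>f :: 's \<Rightarrow> rat. \<forall>a b. R a b \<longrightarrow> f a < f b"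
proof -
  define f :: "'s \<Rightarrow> rat" where "f a = vals R (Suc (to_nat a)) ! to_nat a" for a
  have "f a < f b" if "R a b" for a b
  proof -
    define n where "n = Suc (max (to_nat a) (to_nat b))"
    have lt: "to_nat a < n" "to_nat b < n" unfolding n_def by auto
    have "f a = vals R n ! to_nat a" "f b = vals R n ! to_nat b"
      using vals_prefix[OF lt(1), of R] vals_prefix[OF lt(2), of R] unfolding f_def by simp_all
    moreover have "vals R n ! to_nat a < vals R n ! to_nat b"
      using vals_mono[where R=R and n=n and i="to_nat a" and j="to_nat b", OF trans irr] that lt by simp
    ultimately show ?thesis by simp
  qed
  then show ?thesis by blast
qed


definition lexless :: "rat \<times> nat \<Rightarrow> rat \<times> nat \<Rightarrow> bool" where
  "lexless p q \<longleftrightarrow> fst p < fst q \<or> (fst p = fst q \<and> snd p < snd q)"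

definition emb :: "rat \<times> nat \<Rightarrow> rat" where
  "emb = (SOME f. \<forall>a b. lexless a b \<longrightarrow> f a < f b)"

lemma emb_mono: "lexless a b \<Longrightarrow> emb a < emb b"
proof -
  have "\<exists>f :: rat \<times> nat \<Rightarrow> rat. \<forall>a b. lexless a b \<longrightarrow> f a < f b"
    by (rule countable_order_embedding) (auto simp: lexless_def)
  then have "\<forall>a b. lexless a b \<longrightarrow> emb a < emb b" unfolding emb_def by (rule someI_ex)
  then show "lexless a b \<Longrightarrow> emb a < emb b" by blast
qed

lemma emb_inj: "inj emb"
proof (rule injI)
  fix a b assume e: "emb a = emb b"
  show "a = b"
  proof (rule ccontr)
    assume "a \<noteq> b"
    then have "lexless a b \<or> lexless b a" by (auto simp: lexless_def prod_eq_iff)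
    then show False using emb_mono[of a b] emb_mono[of b a] e by auto
  qed
qed

lemma emb_inv[simp]: "inv_into UNIV emb (emb p) = p"
  by (rule inv_f_f[OF emb_inj])

lemma sorted_blocks:
  assumes "sorted_wrt (<) xs"
  shows "sorted_wrt lexless (concat (map (\<lambda>x. map (Pair x) [0..<k x]) xs))"
  using assms
proof (induction xs)
  case Nil then show ?case by simp
next
  case (Cons x xs)
  have "sorted_wrt lexless (map (Pair x) [0..<k x])"
    unfolding sorted_wrt_map by (rule sorted_wrt_mono_rel[OF _ sorted_wrt_upt]) (simp add: lexless_def)
  moreover have "sorted_wrt lexless (concat (map (\<lambda>x. map (Pair x) [0..<k x]) xs))" using Cons by simp
  moreover have "\<forall>y\<in>set xs. x < y" using Cons.prems by simp
  then have "\<forall>a\<in>set (map (Pair x) [0..<k x]). \<forall>b\<in>set (concat (map (\<lambda>x. map (Pair x) [0..<k x]) xs)). lexless a b"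
    by (auto simp: lexless_def)
  ultimately show ?case by (simp add: sorted_wrt_append)
qed

context prop19
begin

definition TT :: "'a iword \<Rightarrow> (rat \<times> nat) set" where
  "TT W = {p. fst p \<in> fst W \<and> snd p < length (cw (snd W (fst p)))}"

definition LL :: "nat \<Rightarrow> 'a iword \<Rightarrow> (rat \<times> nat) list" where
  "LL m W = concat (map (\<lambda>x. map (Pair x) [0..<length (cw (snd W x))]) (sorted_list_of_set (pos {..<m} W)))"

definition Phi :: "'a iword \<Rightarrow> 'b iword" where
  "Phi W = (emb ` TT W, \<lambda>q. cw (snd W (fst (inv_into UNIV emb q))) ! snd (inv_into UNIV emb q))"

definition QQ :: "nat set \<Rightarrow> 'a iword \<Rightarrow> rat \<times> nat \<Rightarrow> bool" where
  "QQ S W p \<longleftrightarrow> fst (cw (snd W (fst p)) ! snd p) \<in> S"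

lemma snd_Phi[simp]: "snd (Phi W) (emb p) = cw (snd W (fst p)) ! snd p"
  by (simp add: Phi_def)

lemma set_LL:
  assumes "is_iword G W"
  shows "set (LL m W) = {p. fst p \<in> pos {..<m} W \<and> snd p < length (cw (snd W (fst p)))}"
  using finite_pos[OF assms, of "{..<m}"] by (auto simp: LL_def)

lemma cw_letter:
  assumes "is_iword G W" "x \<in> fst W" "j < length (cw (snd W x))"
  shows "fst (cw (snd W x) ! j) \<in> P (fst (snd W x))"
    "snd (cw (snd W x) ! j) \<in> carrier (H (fst (cw (snd W x) ! j)))"
    "snd (cw (snd W x) ! j) \<noteq> \<one>\<^bsub>H (fst (cw (snd W x) ! j))\<^esub>"
proof -
  obtain n g where e: "snd W x = (n, g)" by (cases "snd W x")
  have g: "g \<in> carrier (G n)" using assms e by (auto simp: is_iword_def)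
  have c: "cw (n, g) \<in> fp_words H (P n)" "reduced H (cw (n, g))" using cw_props[OF g] by auto
  have mem: "cw (n, g) ! j \<in> set (cw (n, g))" using assms(3) e by simp
  show "fst (cw (snd W x) ! j) \<in> P (fst (snd W x))" using c(1) mem e by (auto simp: fp_words_iff)
  have "\<forall>l \<in> set r. snd l \<in> carrier (H (fst l)) \<and> snd l \<noteq> \<one>\<^bsub>H (fst l)\<^esub>" if "reduced H r" for r
    using that by (induction r) auto
  then show "snd (cw (snd W x) ! j) \<in> carrier (H (fst (cw (snd W x) ! j)))"
    "snd (cw (snd W x) ! j) \<noteq> \<one>\<^bsub>H (fst (cw (snd W x) ! j))\<^esub>" using c(2) mem e by auto
qed

lemma TT_filter:
  assumes W: "is_iword G W" and m: "\<And>n i. i \<in> S \<Longrightarrow> i \<in> P n \<Longrightarrow> n < m"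
  shows "{p \<in> TT W. QQ S W p} = {p \<in> set (LL m W). QQ S W p}"
proof -
  have "fst p \<in> pos {..<m} W" if "p \<in> TT W" "QQ S W p" for p
  proof -
    have "fst (cw (snd W (fst p)) ! snd p) \<in> P (fst (snd W (fst p)))"
      using cw_letter(1)[OF W] that by (auto simp: TT_def)
    then have "fst (snd W (fst p)) < m" using m that by (auto simp: QQ_def)
    then show ?thesis using that by (auto simp: TT_def pos_def)
  qed
  then show ?thesis unfolding set_LL[OF W] by (auto simp: TT_def pos_def)
qed

lemma pos_Phi: "pos S (Phi W) = emb ` {p \<in> TT W. QQ S W p}"
  by (auto simp: pos_def Phi_def QQ_def)

lemma is_iword_Phi:
  assumes W: "is_iword G W"
  shows "is_iword H (Phi W)"
proof -
  have "finite (pos {i} (Phi W))" for i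
  proof -
    obtain n where n: "i \<in> P n" using P_cover by blast
    have "{p \<in> TT W. QQ {i} W p} = {p \<in> set (LL (Suc n) W). QQ {i} W p}"
      by (rule TT_filter[OF W]) (use n P_unique in fastforce)
    then show ?thesis unfolding pos_Phi by (metis (no_types, lifting) finite_imageI finite_set mem_Collect_eq rev_finite_subset subsetI)
  qed
  moreover have "\<forall>q\<in>fst (Phi W). snd (snd (Phi W) q) \<in> carrier (H (fst (snd (Phi W) q))) \<and>
      snd (snd (Phi W) q) \<noteq> \<one>\<^bsub>H (fst (snd (Phi W) q))\<^esub>"
  proof
    fix q assume "q \<in> fst (Phi W)"
    then obtain p where p: "p \<in> TT W" "q = emb p" by (auto simp: Phi_def)
    show "snd (snd (Phi W) q) \<in> carrier (H (fst (snd (Phi W) q))) \<and>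
      snd (snd (Phi W) q) \<noteq> \<one>\<^bsub>H (fst (snd (Phi W) q))\<^esub>"
      using cw_letter(2,3)[OF W, of "fst p" "snd p"] p by (auto simp: TT_def)
  qed
  ultimately show ?thesis unfolding finite_pos_iff_iword by blast
qed

lemma rs_Phi:
  assumes W: "is_iword G W" and S: "finite S" and m: "\<And>n i. i \<in> S \<Longrightarrow> i \<in> P n \<Longrightarrow> n < m"
  shows "rs S (Phi W) = filter (\<lambda>l. fst l \<in> S) (Psi (rs {..<m} W))"
proof -
  have srt: "sorted_wrt (<) (map emb (filter (QQ S W) (LL m W)))"
    unfolding sorted_wrt_map
  proof (rule sorted_wrt_mono_rel[of _ lexless])
    show "sorted_wrt lexless (filter (QQ S W) (LL m W))"
      unfolding LL_def by (rule sorted_wrt_filter[OF sorted_blocks]) (rule strict_sorted_list_of_set)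
  qed (rule emb_mono)
  have "pos S (Phi W) = emb ` {p \<in> set (LL m W). QQ S W p}" by (simp only: pos_Phi TT_filter[OF W m])
  then have "sorted_list_of_set (pos S (Phi W)) = map emb (filter (QQ S W) (LL m W))"
    using srt by (intro sorted_eqI) (auto simp: finite_pos[OF is_iword_Phi[OF W] S])
  then have "rs S (Phi W) = map (\<lambda>p. cw (snd W (fst p)) ! snd p) (filter (QQ S W) (LL m W))"
    unfolding rs_def by (simp add: comp_def)
  also have "\<dots> = filter (\<lambda>l. fst l \<in> S) (map (\<lambda>p. cw (snd W (fst p)) ! snd p) (LL m W))"
  proof -
    have "QQ S W = (\<lambda>p. fst (cw (snd W (fst p)) ! snd p) \<in> S)" by (rule ext) (simp add: QQ_def)
    then show ?thesis by (simp add: filter_map comp_def)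
  qed
  also have "map (\<lambda>p. cw (snd W (fst p)) ! snd p) (LL m W) = Psi (rs {..<m} W)"
    unfolding LL_def rs_def Psi_def by (simp add: map_concat comp_def map_nth)
  finally show ?thesis .
qed

end


lemma filter_commute: "filter A (filter B xs) = filter B (filter A xs)"
  by (induction xs) auto

lemma trivF_S:
  assumes grp: "\<And>n. group (G n)" and W: "is_iword G W" and t: "trivF G F W" and S: "finite S"
  shows "red G (filter (\<lambda>l. fst l \<notin> F) (rs S W)) = []"
proof -
  obtain M where M: "S \<subseteq> {..<M}" using S finite_nat_bounded by blast
  let ?xs = "rs {..<M} W"
  have "filter (\<lambda>l. fst l \<notin> F) (rs S W) = filter (\<lambda>l. fst l \<in> S) (filter (\<lambda>l. fst l \<notin> F) ?xs)"
    using rs_mono[OF W finite_lessThan M] by (simp add: conj_commute)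
  moreover have "red G (filter (\<lambda>l. fst l \<in> S) (filter (\<lambda>l. fst l \<notin> F) ?xs)) =
      red G (filter (\<lambda>l. fst l \<in> S) (red G (filter (\<lambda>l. fst l \<notin> F) ?xs)))"
    using red_filter[of G "filter (\<lambda>l. fst l \<notin> F) ?xs" "\<lambda>n. n \<in> S"] grp wd_filter[OF wd_rs[OF W finite_lessThan]] by simp
  ultimately show ?thesis using t by (simp add: trivF_def red_def)
qed

context prop19
begin

lemma ex_bound:
  assumes "finite S"
  shows "\<exists>m. \<forall>n i. i \<in> S \<longrightarrow> i \<in> P n \<longrightarrow> n < m"
proof -
  define \<nu> where "\<nu> i = (SOME n. i \<in> P n)" for i
  have nu: "i \<in> P (\<nu> i)" for i unfolding \<nu>_def using P_cover by (rule someI_ex)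
  define m where "m = Suc (Max (insert 0 (\<nu> ` S)))"
  have "n < m" if "i \<in> S" "i \<in> P n" for n i
  proof -
    have "n = \<nu> i" using P_unique[OF that(2) nu] .
    then have "n \<le> Max (insert 0 (\<nu> ` S))" using that(1) assms by (intro Max_ge) auto
    then show ?thesis by (simp add: m_def)
  qed
  then show ?thesis by blast
qed

lemma Phi_rs_red:
  assumes W: "is_iword G W" and S: "finite S" and m: "\<And>n i. i \<in> S \<Longrightarrow> i \<in> P n \<Longrightarrow> n < m"
  shows "red H (rs S (Phi W)) = red H (filter (\<lambda>l. fst l \<in> S) (red H (Psi (red G (rs {..<m} W)))))"
proof -
  have w: "wd G (rs {..<m} W)" by (rule wd_rs[OF W finite_lessThan])
  have "red H (rs S (Phi W)) = red H (filter (\<lambda>l. fst l \<in> S) (red H (Psi (rs {..<m} W))))"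
    using rs_Phi[OF W S m] red_filter[of H "Psi (rs {..<m} W)" "\<lambda>n. n \<in> S"] grpH Psi_wd[OF w] by simp
  also have "\<dots> = red H (filter (\<lambda>l. fst l \<in> S) (red H (Psi (red G (rs {..<m} W)))))"
    using Psi_red[OF w] by simp
  finally show ?thesis .
qed

lemma Phi_eq:
  assumes W: "is_iword G W" and V: "is_iword G V" and e: "iword_eq G W V"
  shows "iword_eq H (Phi W) (Phi V)"
proof -
  have "red H (rs {..<M} (Phi W)) = red H (rs {..<M} (Phi V))" for M
  proof -
    obtain m where m: "\<And>n i. i \<in> {..<M} \<Longrightarrow> i \<in> P n \<Longrightarrow> n < m" using ex_bound[of "{..<M}"] by auto
    show ?thesis using Phi_rs_red[OF W finite_lessThan m] Phi_rs_red[OF V finite_lessThan m]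
      iword_eq_rs[OF grpG W V e finite_lessThan] by simp
  qed
  then show ?thesis using iword_eq_iff[OF grpH is_iword_Phi[OF W] is_iword_Phi[OF V]] by blast
qed

lemma Phi_concat:
  assumes W: "is_iword G W" and V: "is_iword G V"
  shows "iword_eq H (Phi (iword_concat W V)) (iword_concat (Phi W) (Phi V))"
proof (rule eq_by_rs)
  fix M
  obtain m where m: "\<And>n i. i \<in> {..<M} \<Longrightarrow> i \<in> P n \<Longrightarrow> n < m" using ex_bound[of "{..<M}"] by auto
  show "rs {..<M} (Phi (iword_concat W V)) = rs {..<M} (iword_concat (Phi W) (Phi V))"
    using rs_Phi[OF is_iword_concat[OF W V] finite_lessThan m] rs_Phi[OF W finite_lessThan m]
      rs_Phi[OF V finite_lessThan m] rs_concat[OF W V finite_lessThan]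
      rs_concat[OF is_iword_Phi[OF W] is_iword_Phi[OF V] finite_lessThan] by simp
qed

definition PhiC :: "'a iword set \<Rightarrow> 'b iword set" where
  "PhiC a = cls H (Phi (SOME W. W \<in> a))"

lemma PhiC_cls:
  assumes W: "is_iword G W"
  shows "PhiC (cls G W) = cls H (Phi W)"
proof -
  have "W \<in> cls G W" using W by (simp add: mem_cls iword_eq_refl)
  then have "(SOME V. V \<in> cls G W) \<in> cls G W" by (rule someI)
  then have V: "is_iword G (SOME V. V \<in> cls G W)" "iword_eq G W (SOME V. V \<in> cls G W)" by (auto simp: mem_cls)
  have "iword_eq H (Phi W) (Phi (SOME V. V \<in> cls G W))" by (rule Phi_eq[OF W V])
  then show ?thesis unfolding PhiC_def using cls_eq[OF is_iword_Phi[OF V(1)] is_iword_Phi[OF W]] iword_eq_sym by blast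
qed

lemma PhiC_hom: "PhiC \<in> hom (TP G) (TP H)"
proof (rule homI)
  fix a assume "a \<in> carrier (TP G)"
  then obtain W where W: "is_iword G W" "a = cls G W" by (auto simp: carrier_TP)
  then show "PhiC a \<in> carrier (TP H)" using PhiC_cls is_iword_Phi by (auto simp: carrier_TP)
next
  fix a b assume "a \<in> carrier (TP G)" "b \<in> carrier (TP G)"
  then obtain W V where W: "is_iword G W" "a = cls G W" and V: "is_iword G V" "b = cls G V"
    by (auto simp: carrier_TP)
  have "PhiC (a \<otimes>\<^bsub>TP G\<^esub> b) = cls H (Phi (iword_concat W V))"
    using mult_TP[of G, OF grpG W(1) V(1)] W V PhiC_cls[OF is_iword_concat[OF W(1) V(1)]] by simp
  also have "\<dots> = cls H (iword_concat (Phi W) (Phi V))"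
    using cls_eq[OF is_iword_Phi[OF is_iword_concat[OF W(1) V(1)]] is_iword_concat[OF is_iword_Phi[OF W(1)] is_iword_Phi[OF V(1)]]]
      Phi_concat[OF W(1) V(1)] by simp
  also have "\<dots> = PhiC a \<otimes>\<^bsub>TP H\<^esub> PhiC b"
    using mult_TP[of H, OF grpH is_iword_Phi[OF W(1)] is_iword_Phi[OF V(1)]] PhiC_cls W V by simp
  finally show "PhiC (a \<otimes>\<^bsub>TP G\<^esub> b) = PhiC a \<otimes>\<^bsub>TP H\<^esub> PhiC b" .
qed

lemma filter_Psi:
  assumes w: "wd G xs"
  shows "filter (\<lambda>l. fst l \<notin> \<Union> (P ` E)) (Psi xs) = Psi (filter (\<lambda>l. fst l \<notin> E) xs)"
  using w
proof (induction xs)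
  case Nil then show ?case by simp
next
  case (Cons x xs)
  have xs: "wd G xs" and x: "snd x \<in> carrier (G (fst x))" using Cons.prems by auto
  have cP: "\<forall>l\<in>set (cw x). fst l \<in> P (fst x)"
    using cw_props(1)[of "snd x" "fst x"] x by (simp add: fp_words_iff)
  show ?case
  proof (cases "fst x \<in> E")
    case True
    then have "filter (\<lambda>l. fst l \<notin> \<Union> (P ` E)) (cw x) = []" using cP by (auto intro: filter_False)
    then show ?thesis using True Cons.IH[OF xs] by simp
  next
    case False
    then have "\<forall>l\<in>set (cw x). fst l \<notin> \<Union> (P ` E)" using cP P_unique by blast
    then have "filter (\<lambda>l. fst l \<notin> \<Union> (P ` E)) (cw x) = cw x" by (simp add: filter_True)
    then show ?thesis using False Cons.IH[OF xs] by simp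
  qed
qed

lemma trivF_Phi:
  assumes W: "is_iword G W"
  shows "trivF G E W \<longleftrightarrow> trivF H (\<Union> (P ` E)) (Phi W)"
proof
  assume t: "trivF G E W"
  show "trivF H (\<Union> (P ` E)) (Phi W)" unfolding trivF_def
  proof
    fix M
    obtain m where m: "\<And>n i. i \<in> {..<M} \<Longrightarrow> i \<in> P n \<Longrightarrow> n < m" using ex_bound[of "{..<M}"] by auto
    let ?xs = "rs {..<m} W"
    have w: "wd G ?xs" by (rule wd_rs[OF W finite_lessThan])
    have fw: "wd G (filter (\<lambda>l. fst l \<notin> E) ?xs)" by (rule wd_filter[OF w])
    have "filter (\<lambda>l. fst l \<notin> \<Union> (P ` E)) (rs {..<M} (Phi W)) =
       filter (\<lambda>l. fst l \<in> {..<M}) (Psi (filter (\<lambda>l. fst l \<notin> E) ?xs))"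
    proof -
      have e1: "rs {..<M} (Phi W) = filter (\<lambda>l. fst l \<in> {..<M}) (Psi ?xs)" by (rule rs_Phi[OF W finite_lessThan m])
      have "filter (\<lambda>l. fst l \<notin> \<Union> (P ` E)) (rs {..<M} (Phi W)) =
          filter (\<lambda>l. fst l \<in> {..<M}) (filter (\<lambda>l. fst l \<notin> \<Union> (P ` E)) (Psi ?xs))"
        unfolding e1 by (rule filter_commute)
      then show ?thesis unfolding filter_Psi[OF w] .
    qed
    moreover have "red H (filter (\<lambda>l. fst l \<in> {..<M}) (Psi (filter (\<lambda>l. fst l \<notin> E) ?xs))) =
        red H (filter (\<lambda>l. fst l \<in> {..<M}) (red H (Psi (red G (filter (\<lambda>l. fst l \<notin> E) ?xs)))))"
      using red_filter[of H "Psi (filter (\<lambda>l. fst l \<notin> E) ?xs)" "\<lambda>n. n \<in> {..<M}"] grpH Psi_wd[OF fw]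
        Psi_red[OF fw] by simp
    moreover have "red G (filter (\<lambda>l. fst l \<notin> E) ?xs) = []" using t by (simp add: trivF_def)
    ultimately show "red H (filter (\<lambda>l. fst l \<notin> \<Union> (P ` E)) (rs {..<M} (Phi W))) = []"
      by (simp add: red_def)
  qed
next
  assume t: "trivF H (\<Union> (P ` E)) (Phi W)"
  show "trivF G E W" unfolding trivF_def
  proof
    fix m
    define S where "S = \<Union> (P ` {..<m})"
    have fS: "finite S" using P_fin by (simp add: S_def)
    have mS: "\<And>n i. i \<in> S \<Longrightarrow> i \<in> P n \<Longrightarrow> n < m" using P_unique by (auto simp: S_def)
    let ?xs = "rs {..<m} W"
    have w: "wd G ?xs" by (rule wd_rs[OF W finite_lessThan])
    have fw: "wd G (filter (\<lambda>l. fst l \<notin> E) ?xs)" by (rule wd_filter[OF w])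
    have allS: "\<forall>l\<in>set (Psi ys). fst l \<in> S" if ys1: "set ys \<subseteq> set ?xs" and ys2: "wd G ys" for ys
    proof
      fix l assume "l \<in> set (Psi ys)"
      then obtain x where x: "x \<in> set ys" "fst l \<in> P (fst x)" using Psi_idx[OF ys2] by blast
      have "fst x < m" using x(1) ys1 rs_wd[OF W finite_lessThan, of m] by (auto simp: fp_words_iff)
      then show "fst l \<in> S" using x by (auto simp: S_def)
    qed
    have "filter (\<lambda>l. fst l \<notin> \<Union> (P ` E)) (rs S (Phi W)) = Psi (filter (\<lambda>l. fst l \<notin> E) ?xs)"
    proof -
      have "rs S (Phi W) = Psi ?xs" using rs_Phi[OF W fS mS] allS[of ?xs] w by (simp add: filter_True)
      then show ?thesis using filter_Psi[OF w, of E] by simp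
    qed
    moreover have "red H (filter (\<lambda>l. fst l \<notin> \<Union> (P ` E)) (rs S (Phi W))) = []"
      by (rule trivF_S[OF grpH is_iword_Phi[OF W] t fS])
    ultimately have "red H (Psi (filter (\<lambda>l. fst l \<notin> E) ?xs)) = []" by simp
    then show "red G (filter (\<lambda>l. fst l \<notin> E) ?xs) = []" by (rule Psi_inj[OF fw])
  qed
qed

lemma PhiC_N:
  assumes a: "a \<in> carrier (TP G)"
  shows "PhiC a \<in> KK H \<longleftrightarrow> a \<in> KK G"
proof -
  obtain W where W: "is_iword G W" "a = cls G W" using a by (auto simp: carrier_TP)
  have pa: "PhiC a = cls H (Phi W)" "PhiC a \<in> carrier (TP H)"
    using PhiC_cls[OF W(1)] W is_iword_Phi[OF W(1)] by (auto simp: carrier_TP)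
  show ?thesis
  proof
    assume "PhiC a \<in> KK H"
    then obtain F where F: "finite F" "trivF H F (Phi W)" using KK_rep[OF grpH _ is_iword_Phi[OF W(1)] pa(1)] by blast
    define \<nu> where "\<nu> i = (SOME n. i \<in> P n)" for i
    have nu: "i \<in> P (\<nu> i)" for i unfolding \<nu>_def using P_cover by (rule someI_ex)
    define E where "E = \<nu> ` F"
    have fE: "finite E" using F(1) by (simp add: E_def)
    have "F \<subseteq> \<Union> (P ` E)" using nu by (auto simp: E_def)
    then have "trivF H (\<Union> (P ` E)) (Phi W)" by (rule trivF_mono[OF grpH is_iword_Phi[OF W(1)] F(2)])
    then have "trivF G E W" using trivF_Phi[OF W(1)] by simp
    then show "a \<in> KK G" using a W fE unfolding KK_def by blast
  next
    assume "a \<in> KK G"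
    then obtain E where E: "finite E" "trivF G E W" using KK_rep[OF grpG _ W(1) W(2)] by blast
    have "trivF H (\<Union> (P ` E)) (Phi W)" using trivF_Phi[OF W(1)] E(2) by simp
    moreover have "finite (\<Union> (P ` E))" using E(1) P_fin by simp
    ultimately show "PhiC a \<in> KK H" using pa is_iword_Phi[OF W(1)] unfolding KK_def by blast
  qed
qed

theorem main: "embeds (archipelago G) (archipelago H)"
proof -
  interpret TG: group "TP G" by (rule group_TP[OF grpG])
  interpret TH: group "TP H" by (rule group_TP[OF grpH])
  let ?M = "normal_closure (TP H) (free_part H)"
  have MK: "?M = KK H" by (rule KK_eq_N[OF grpH])
  have NK: "normal_closure (TP G) (free_part G) = KK G" by (rule KK_eq_N[OF grpG])
  interpret Mn: normal ?M "TP H" unfolding MK by (rule KK_normal[OF grpH])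
  define h where "h = (\<lambda>a. r_coset (TP H) ?M a) \<circ> PhiC"
  have hh: "h \<in> hom (TP G) (TP H Mod ?M)"
    unfolding h_def by (rule hom_compose[OF PhiC_hom Mn.r_coset_hom_Mod])
  interpret gh: group_hom "TP G" "TP H Mod ?M" h
    by (intro group_hom.intro group_hom_axioms.intro TG.group_axioms Mn.factorgroup_is_group hh)
  have ker: "kernel (TP G) (TP H Mod ?M) h = normal_closure (TP G) (free_part G)"
  proof -
    have "h a = ?M \<longleftrightarrow> a \<in> KK G" if a: "a \<in> carrier (TP G)" for a
    proof -
      have pc: "PhiC a \<in> carrier (TP H)" using PhiC_hom a by (auto simp: hom_def)
      have "h a = ?M \<longleftrightarrow> PhiC a \<in> ?M"
        using TH.coset_join1[OF _ pc Mn.subgroup_axioms] TH.coset_join2[OF pc Mn.subgroup_axioms]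
        by (auto simp: h_def)
      then show ?thesis using PhiC_N[OF a] MK by simp
    qed
    then show ?thesis unfolding kernel_def NK using KK_def by auto
  qed
  have "(\<lambda>Y. the_elem (h ` Y)) \<in> hom (TP G Mod kernel (TP G) (TP H Mod ?M) h) (TP H Mod ?M)"
    by (rule gh.FactGroup_hom)
  moreover have "inj_on (\<lambda>Y. the_elem (h ` Y)) (carrier (TP G Mod kernel (TP G) (TP H Mod ?M) h))"
    by (rule gh.FactGroup_inj_on)
  ultimately show ?thesis unfolding embeds_def archipelago_def ker by blast
qed

end



theorem proposition19:
  fixes G :: "nat \<Rightarrow> 'a monoid" and H :: "nat \<Rightarrow> 'b monoid"
    and P :: "nat \<Rightarrow> nat set" and \<phi> :: "nat \<Rightarrow> 'a \<Rightarrow> (nat \<times> 'b) list set"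
  assumes "\<And>n. group (G n)" and "\<And>n. group (H n)"
    and "finite_partition P"
    and "\<And>n. \<phi> n \<in> hom (G n) (free_product H (P n))"
    and "\<And>n. inj_on (\<phi> n) (carrier (G n))"
  shows "embeds (archipelago G) (archipelago H)"
proof -
  interpret prop19 G H P \<phi> by (rule prop19.intro) (fact assms)+
  show ?thesis by (rule main)
qed

end
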